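(* For any tree $T$, the matrix $\mathrm{Min4PC}_T=(m_{a,b})_{a,b\in\mathcal{V}_2}$ is hypermetric, is of negative type, and has exactly one positive eigenvalue.
   Context: For a tree $T$ with vertex set $V$ on $n$ vertices, $d_{i,j}$ is the distance between $i,j$ and $\mathcal{V}_2$ the set of 2-element subsets of $V$. $\mathrm{Min4PC}_T$ is the $\binom n2\times\binom n2$ matrix indexed by $\mathcal{V}_2$ whose entry in row $\{i,j\}$, column $\{k,l\}$ is $\min\{d_{i,l}+d_{j,k},\ d_{i,k}+d_{j,l},\ d_{i,j}+d_{k,l}\}$. A symmetric matrix $D=(d_{a,b})$ indexed by a finite set $X$ (with zero diagonal) is hypermetric if $\sum_{\{a,b\}\subseteq X, a\ne b} x_ax_bd_{a,b}\le 0$ for all integer vectors $x\in\mathbb{Z}^X$ with $\sum_a x_a=1$, and of negative type if the same inequality holds for all $x\in\mathbb{Z}^X$ with $\sum_a x_a=0$. *)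

theory Defs
  imports "Jordan_Normal_Form.Char_Poly" "HOL-Library.Product_Lexorder"
begin

definition simple_graph :: "'a set \<Rightarrow> ('a \<Rightarrow> 'a \<Rightarrow> bool) \<Rightarrow> bool" where
  "simple_graph V E \<longleftrightarrow> finite V \<and>
     (\<forall>u v. E u v \<longrightarrow> u \<in> V \<and> v \<in> V \<and> u \<noteq> v \<and> E v u)"

definition is_walk :: "'a set \<Rightarrow> ('a \<Rightarrow> 'a \<Rightarrow> bool) \<Rightarrow> 'a list \<Rightarrow> bool" where
  "is_walk V E xs \<longleftrightarrow> xs \<noteq> [] \<and> set xs \<subseteq> V \<and>
     (\<forall>i. Suc i < length xs \<longrightarrow> E (xs ! i) (xs ! Suc i))"

definition graph_connected :: "'a set \<Rightarrow> ('a \<Rightarrow> 'a \<Rightarrow> bool) \<Rightarrow> bool" where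
  "graph_connected V E \<longleftrightarrow>
     (\<forall>u\<in>V. \<forall>v\<in>V. \<exists>xs. is_walk V E xs \<and> hd xs = u \<and> last xs = v)"

text \<open>A cycle: a closed walk v0 v1 ... vk = v0 with k \<ge> 3 and v0,...,v(k-1) distinct.\<close>
definition is_cycle :: "'a set \<Rightarrow> ('a \<Rightarrow> 'a \<Rightarrow> bool) \<Rightarrow> 'a list \<Rightarrow> bool" where
  "is_cycle V E xs \<longleftrightarrow> is_walk V E xs \<and> length xs \<ge> 4 \<and>
     hd xs = last xs \<and> distinct (tl xs)"

definition is_tree :: "'a set \<Rightarrow> ('a \<Rightarrow> 'a \<Rightarrow> bool) \<Rightarrow> bool" where
  "is_tree V E \<longleftrightarrow> simple_graph V E \<and> V \<noteq> {} \<and> graph_connected V E \<and>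
     \<not> (\<exists>xs. is_cycle V E xs)"

definition gdist :: "'a set \<Rightarrow> ('a \<Rightarrow> 'a \<Rightarrow> bool) \<Rightarrow> 'a \<Rightarrow> 'a \<Rightarrow> nat" where
  "gdist V E u v = (LEAST n. \<exists>xs. is_walk V E xs \<and> hd xs = u \<and> last xs = v
                                   \<and> length xs = Suc n)"

text \<open>The 2-element subsets {i,j} of V are represented by ordered pairs (i,j) with i < j.\<close>
definition pairs2 :: "'a::linorder set \<Rightarrow> ('a \<times> 'a) set" where
  "pairs2 V = {(i, j). i \<in> V \<and> j \<in> V \<and> i < j}"

definition min4pc_entry ::
  "'a::linorder set \<Rightarrow> ('a \<Rightarrow> 'a \<Rightarrow> bool) \<Rightarrow> 'a \<times> 'a \<Rightarrow> 'a \<times> 'a \<Rightarrow> real" where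
  "min4pc_entry V E p q = (case p of (i, j) \<Rightarrow> case q of (k, l) \<Rightarrow>
     (let d = (\<lambda>a b. real (gdist V E a b)) in
      min (d i l + d j k) (min (d i k + d j l) (d i j + d k l))))"

text \<open>The matrix Min4PC_T, with rows/columns ordered by an enumeration of the
  2-subsets (the spectrum does not depend on this enumeration).\<close>
definition min4pc_matrix :: "'a::linorder set \<Rightarrow> ('a \<Rightarrow> 'a \<Rightarrow> bool) \<Rightarrow> real mat" where
  "min4pc_matrix V E =
     (let ps = sorted_list_of_set (pairs2 V); N = length ps in
      mat N N (\<lambda>(r, c). min4pc_entry V E (ps ! r) (ps ! c)))"

text \<open>For a symmetric d, the sum over unordered pairs {a,b}, a \<noteq> b, equals half the
  sum over ordered pairs (a,b), a \<noteq> b.\<close>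

definition hypermetric :: "'b set \<Rightarrow> ('b \<Rightarrow> 'b \<Rightarrow> real) \<Rightarrow> bool" where
  "hypermetric X d \<longleftrightarrow> (\<forall>x :: 'b \<Rightarrow> int. (\<Sum>a\<in>X. x a) = 1 \<longrightarrow>
     (\<Sum>a\<in>X. \<Sum>b\<in>X. if a \<noteq> b then real_of_int (x a * x b) * d a b else 0) / 2 \<le> 0)"

definition negative_type :: "'b set \<Rightarrow> ('b \<Rightarrow> 'b \<Rightarrow> real) \<Rightarrow> bool" where
  "negative_type X d \<longleftrightarrow> (\<forall>x :: 'b \<Rightarrow> int. (\<Sum>a\<in>X. x a) = 0 \<longrightarrow>
     (\<Sum>a\<in>X. \<Sum>b\<in>X. if a \<noteq> b then real_of_int (x a * x b) * d a b else 0) / 2 \<le> 0)"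

definition num_pos_eigenvalues :: "real mat \<Rightarrow> nat" where
  "num_pos_eigenvalues A =
     (\<Sum>r\<in>{r. r > 0 \<and> poly (char_poly A) r = 0}. order r (char_poly A))"

end

theory Submission
  imports Defs "Jordan_Normal_Form.Spectral_Radius"
begin

lemma succ_nth: "successively P xs \<longleftrightarrow> (\<forall>i. Suc i < length xs \<longrightarrow> P (xs!i) (xs!Suc i))"
proof (induction P xs rule: successively.induct)
  case (3 P x y xs)
  show ?case
  proof
    assume a: "successively P (x # y # xs)"
    show "\<forall>i. Suc i < length (x # y # xs) \<longrightarrow> P ((x # y # xs) ! i) ((x # y # xs) ! Suc i)"
    proof (intro allI impI)
      fix i assume "Suc i < length (x # y # xs)"
      then show "P ((x # y # xs) ! i) ((x # y # xs) ! Suc i)"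
        using a 3 by (cases i) auto
    qed
  next
    assume a: "\<forall>i. Suc i < length (x # y # xs) \<longrightarrow> P ((x # y # xs) ! i) ((x # y # xs) ! Suc i)"
    have "P x y" using a[rule_format, of 0] by simp
    moreover have "\<forall>i. Suc i < length (y # xs) \<longrightarrow> P ((y # xs) ! i) ((y # xs) ! Suc i)"
      using a[rule_format, of "Suc _"] by auto
    ultimately show "successively P (x # y # xs)" using 3 by simp
  qed
qed auto

lemma in_set_drop_nth: "y \<in> set (drop n xs) \<longleftrightarrow> (\<exists>i. n \<le> i \<and> i < length xs \<and> xs ! i = y)"
proof
  assume "y \<in> set (drop n xs)"
  then obtain j where j: "j < length (drop n xs)" "drop n xs ! j = y" by (auto simp: in_set_conv_nth)
  then show "\<exists>i. n \<le> i \<and> i < length xs \<and> xs ! i = y"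
    by (intro exI[of _ "n + j"]) auto
next
  assume "\<exists>i. n \<le> i \<and> i < length xs \<and> xs ! i = y"
  then obtain i where i: "n \<le> i" "i < length xs" "xs ! i = y" by auto
  then have "drop n xs ! (i - n) = y" "i - n < length (drop n xs)" by auto
  then show "y \<in> set (drop n xs)" by (metis nth_mem)
qed

lemma change_pos:
  fixes f :: "nat \<Rightarrow> bool"
  assumes "f a \<noteq> f b" "a \<le> b"
  shows "\<exists>s. a \<le> s \<and> s < b \<and> f s \<noteq> f (Suc s)"
  using assms
proof (induction b)
  case 0 then show ?case by auto
next
  case (Suc b)
  show ?case
  proof (cases "a \<le> b \<and> f a \<noteq> f b")
    case True with Suc.IH show ?thesis by (metis less_Suc_eq)
  next
    case False
    then show ?thesis using Suc.prems by (metis le_Suc_eq lessI order_refl)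
  qed
qed

locale tree_ctx =
  fixes V :: "'a::linorder set" and E :: "'a \<Rightarrow> 'a \<Rightarrow> bool"
  assumes tree: "is_tree V E"
begin

abbreviation d :: "'a \<Rightarrow> 'a \<Rightarrow> nat" where "d \<equiv> gdist V E"

lemma finV: "finite V" using tree unfolding is_tree_def simple_graph_def by auto

lemma E_facts: assumes "E u v" shows "u \<in> V" "v \<in> V" "u \<noteq> v" "E v u"
  using tree assms unfolding is_tree_def simple_graph_def by auto

lemma E_sym: "E u v \<Longrightarrow> E v u" using E_facts by blast

definition wk :: "'a \<Rightarrow> 'a \<Rightarrow> 'a list \<Rightarrow> bool" where
  "wk u v xs \<longleftrightarrow> is_walk V E xs \<and> hd xs = u \<and> last xs = v"

lemma is_walk_succ: "is_walk V E xs \<longleftrightarrow> xs \<noteq> [] \<and> set xs \<subseteq> V \<and> successively E xs"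
  unfolding is_walk_def succ_nth by auto

lemma wk_def2: "wk u v xs \<longleftrightarrow> xs \<noteq> [] \<and> set xs \<subseteq> V \<and> successively E xs \<and> hd xs = u \<and> last xs = v"
  unfolding wk_def is_walk_succ by auto

lemma wk_single: "u \<in> V \<Longrightarrow> wk u u [u]" unfolding wk_def2 by auto

lemma wk_edge: "E u v \<Longrightarrow> wk u v [u, v]" unfolding wk_def2 using E_facts by auto

lemma succ_rev_E: "successively E xs \<Longrightarrow> successively E (rev xs)"
  by (simp add: successively_mono E_sym)

lemma wk_rev: "wk u v xs \<Longrightarrow> wk v u (rev xs)"
  unfolding wk_def2 using succ_rev_E by (auto simp: hd_rev last_rev)

lemma wk_app: assumes "wk u v xs" "wk v w ys" shows "wk u w (xs @ tl ys)"
proof -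
  obtain y ys' where ys: "ys = y # ys'" using assms(2) unfolding wk_def2 by (cases ys) auto
  have "successively E (xs @ ys')"
  proof (cases ys')
    case Nil then show ?thesis using assms unfolding wk_def2 by auto
  next
    case (Cons z zs)
    then show ?thesis using assms unfolding wk_def2 ys
      by (auto simp: successively_append_iff successively_Cons)
  qed
  then show ?thesis using assms unfolding wk_def2 ys by (cases ys') auto
qed

lemma wk_take: assumes "wk u v xs" "i < length xs" shows "wk u (xs ! i) (take (Suc i) xs)"
  using assms unfolding wk_def is_walk_def
  by (auto simp: hd_conv_nth last_conv_nth dest: in_set_takeD)

lemma wk_drop: assumes "wk u v xs" "i < length xs" shows "wk (xs ! i) v (drop i xs)"
  using assms unfolding wk_def is_walk_def
  by (auto simp: hd_drop_conv_nth last_drop dest: in_set_dropD)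

lemma conn: "u \<in> V \<Longrightarrow> v \<in> V \<Longrightarrow> \<exists>xs. wk u v xs"
  using tree unfolding is_tree_def graph_connected_def wk_def by blast

lemma d_ex: assumes "u \<in> V" "v \<in> V" shows "\<exists>xs. wk u v xs \<and> length xs = Suc (d u v)"
proof -
  obtain xs where xs: "wk u v xs" using conn assms by blast
  let ?P = "\<lambda>n. \<exists>xs. is_walk V E xs \<and> hd xs = u \<and> last xs = v \<and> length xs = Suc n"
  have ne: "xs \<noteq> []" using xs by (auto simp: wk_def2)
  have "?P (length xs - 1)" using xs ne unfolding wk_def by (intro exI[of _ xs]) auto
  then have "?P (LEAST n. ?P n)" by (rule LeastI)
  then show ?thesis unfolding wk_def gdist_def by blast
qed

lemma d_le: assumes "wk u v xs" shows "Suc (d u v) \<le> length xs"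
proof -
  have ne: "xs \<noteq> []" using assms unfolding wk_def2 by auto
  then have "length xs = Suc (length xs - 1)" by simp
  then have "d u v \<le> length xs - 1" unfolding gdist_def using assms unfolding wk_def
    by (intro Least_le) blast
  then show ?thesis using ne by (cases xs) auto
qed

lemma d_tri: assumes "u \<in> V" "v \<in> V" "w \<in> V" shows "d u w \<le> d u v + d v w"
proof -
  obtain xs where xs: "wk u v xs" "length xs = Suc (d u v)" using d_ex assms by blast
  obtain ys where ys: "wk v w ys" "length ys = Suc (d v w)" using d_ex assms(2,3) by blast
  have "wk u w (xs @ tl ys)" using wk_app xs ys by blast
  from d_le[OF this] show ?thesis using xs ys by simp
qed

lemma d_sym: assumes "u \<in> V" "v \<in> V" shows "d u v = d v u"
proof -
  have "d v u \<le> d u v" if uv: "u \<in> V" "v \<in> V" for u v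
  proof -
    obtain xs where xs: "wk u v xs" "length xs = Suc (d u v)" using d_ex[OF uv] by blast
    from d_le[OF wk_rev[OF xs(1)]] xs show ?thesis by simp
  qed
  with assms show ?thesis by (meson antisym)
qed

lemma d_refl: "u \<in> V \<Longrightarrow> d u u = 0"
  using d_le[OF wk_single] by fastforce

lemma d_zero: assumes "u \<in> V" "v \<in> V" "d u v = 0" shows "u = v"
proof -
  obtain xs where xs: "wk u v xs" "length xs = Suc (d u v)" using d_ex assms by blast
  then show ?thesis using assms(3) unfolding wk_def2 by (cases xs) auto
qed

lemma d_edge: assumes "E u v" shows "d u v = 1"
proof -
  have "d u v \<le> 1" using d_le[OF wk_edge[OF assms]] by simp
  moreover have "d u v \<noteq> 0" using d_zero E_facts[OF assms] by blast
  ultimately show ?thesis by simp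
qed

lemma d_adj: assumes "E a b" "x \<in> V" shows "d x b \<le> d x a + 1"
  using d_tri[of x a b] d_edge[OF assms(1)] E_facts[OF assms(1)] assms(2) by simp

definition geo :: "'a \<Rightarrow> 'a \<Rightarrow> 'a list \<Rightarrow> bool" where
  "geo u v xs \<longleftrightarrow> wk u v xs \<and> length xs = Suc (d u v)"

lemma geo_ex: "u \<in> V \<Longrightarrow> v \<in> V \<Longrightarrow> \<exists>xs. geo u v xs"
  using d_ex unfolding geo_def by blast

lemma geo_V: "geo u v xs \<Longrightarrow> set xs \<subseteq> V" unfolding geo_def wk_def2 by auto
lemma geo_ends: "geo u v xs \<Longrightarrow> u \<in> V \<and> v \<in> V" unfolding geo_def wk_def2 by auto
lemma geo_succ: "geo u v xs \<Longrightarrow> successively E xs" unfolding geo_def wk_def2 by auto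
lemma geo_hd: "geo u v xs \<Longrightarrow> xs ! 0 = u" unfolding geo_def wk_def2 by (auto simp: hd_conv_nth)
lemma geo_last: assumes "geo u v xs" shows "xs ! d u v = v"
proof -
  have "xs \<noteq> []" "last xs = v" "length xs = Suc (d u v)" using assms unfolding geo_def wk_def2 by auto
  then show ?thesis by (simp add: last_conv_nth)
qed

lemma geo_E: "geo u v xs \<Longrightarrow> Suc t < length xs \<Longrightarrow> E (xs ! t) (xs ! Suc t)"
  using geo_succ succ_nth by blast

lemma geo_distinct: assumes "geo u v xs" shows "distinct xs"
proof (rule ccontr)
  assume "\<not> distinct xs"
  then obtain i j where ij: "i < j" "j < length xs" "xs ! i = xs ! j"
    by (metis distinct_conv_nth linorder_neqE_nat)
  have w: "wk u v xs" using assms geo_def by auto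
  have il: "i < length xs" using ij by simp
  have "wk u (xs ! i) (take (Suc i) xs)" using wk_take[OF w il] .
  moreover have "wk (xs ! i) v (drop j xs)" using wk_drop[OF w ij(2)] unfolding ij(3) .
  ultimately have "wk u v (take (Suc i) xs @ tl (drop j xs))" by (rule wk_app)
  from d_le[OF this] have "Suc (d u v) \<le> Suc i + (length xs - j - 1)" using ij by simp
  then show False using assms ij unfolding geo_def by simp
qed

lemma geo_nth: assumes "geo u v xs" "t < length xs"
  shows "d u (xs ! t) = t" "d (xs ! t) v = d u v - t"
proof -
  have w: "wk u v xs" and len: "length xs = Suc (d u v)" using assms geo_def by auto
  have V: "u \<in> V" "v \<in> V" "xs ! t \<in> V" using geo_V[OF assms(1)] geo_ends[OF assms(1)] nth_mem[OF assms(2)] by auto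
  have a: "d u (xs ! t) \<le> t" using d_le[OF wk_take[OF w assms(2)]] assms(2) by simp
  have b: "d (xs ! t) v \<le> d u v - t" using d_le[OF wk_drop[OF w assms(2)]] len by simp
  have c: "d u v \<le> d u (xs ! t) + d (xs ! t) v" using d_tri V by blast
  show "d u (xs ! t) = t" "d (xs ! t) v = d u v - t" using a b c assms(2) len by linarith+
qed

lemma geo_rev: assumes "geo u v xs" shows "geo v u (rev xs)"
  using assms wk_rev d_sym geo_ends unfolding geo_def by auto

end

context tree_ctx begin

lemma no_cycle: "\<not> is_cycle V E xs" using tree unfolding is_tree_def by blast

lemma bip: assumes e: "E u v" and x: "x \<in> V" shows "d x u \<noteq> d x v"
proof
  assume eq: "d x u = d x v"
  define k where "k = d x u"
  have uV: "u \<in> V" and vV: "v \<in> V" and uv: "u \<noteq> v" using E_facts[OF e] by auto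
  obtain pu where pu: "geo x u pu" using geo_ex x uV by blast
  obtain pv where pv: "geo x v pv" using geo_ex x vV by blast
  have lpu: "length pu = Suc k" and lpv: "length pv = Suc k" using pu pv eq unfolding geo_def k_def by auto
  define M where "M = {s. s \<le> k \<and> pu ! s = pv ! s}"
  have finM: "finite M" unfolding M_def by auto
  have "0 \<in> M" unfolding M_def using geo_hd[OF pu] geo_hd[OF pv] by auto
  then have M_ne: "M \<noteq> {}" by auto
  define s where "s = Max M"
  have sM: "s \<in> M" unfolding s_def using finM M_ne by (rule Max_in)
  have smax: "\<And>a. a \<in> M \<Longrightarrow> a \<le> s" unfolding s_def using finM by auto
  have puk: "pu ! k = u" using geo_last[OF pu] k_def by simp
  have pvk: "pv ! k = v" using geo_last[OF pv] k_def eq by simp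
  have sk: "s < k"
  proof -
    have "s \<le> k" using sM M_def by auto
    moreover have "s \<noteq> k" using sM uv puk pvk unfolding M_def by auto
    ultimately show ?thesis by simp
  qed
  define P1 where "P1 = drop s pu"
  define P2 where "P2 = drop s pv"
  define cyc where "cyc = P1 @ rev P2"
  have dpu: "distinct pu" using geo_distinct[OF pu] .
  have dpv: "distinct pv" using geo_distinct[OF pv] .
  have P1ne: "P1 \<noteq> []" and P2ne: "P2 \<noteq> []" unfolding P1_def P2_def using lpu lpv sk by auto
  have lastP1: "last P1 = u" unfolding P1_def using lpu sk puk by (simp add: last_drop last_conv_nth)
  have lastP2: "last P2 = v" unfolding P2_def using lpv sk pvk by (simp add: last_drop last_conv_nth)
  have hdP1: "hd P1 = pu ! s" unfolding P1_def using lpu sk by (simp add: hd_drop_conv_nth)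
  have hdP2: "hd P2 = pu ! s" unfolding P2_def using lpv sk sM M_def by (simp add: hd_drop_conv_nth)
  have sP1: "successively E P1" unfolding P1_def using geo_succ[OF pu] succ_nth by (auto simp: succ_nth)
  have sP2: "successively E P2" unfolding P2_def using geo_succ[OF pv] succ_nth by (auto simp: succ_nth)
  have walk: "is_walk V E cyc"
    unfolding is_walk_succ cyc_def using P1ne P2ne geo_V[OF pu] geo_V[OF pv] sP1 succ_rev_E[OF sP2]
      lastP1 lastP2 e
    by (auto simp: P1_def P2_def successively_append_iff hd_rev dest: in_set_dropD)
  have len: "length cyc \<ge> 4" unfolding cyc_def P1_def P2_def using lpu lpv sk by simp
  have hl: "hd cyc = last cyc" unfolding cyc_def using P1ne P2ne hdP1 hdP2 by (simp add: last_rev)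
  have tlc: "tl cyc = drop (Suc s) pu @ rev P2" unfolding cyc_def P1_def using P1ne P1_def
    by (simp add: drop_Suc tl_drop)
  have disj: "set (drop (Suc s) pu) \<inter> set P2 = {}"
  proof (rule ccontr)
    assume "set (drop (Suc s) pu) \<inter> set P2 \<noteq> {}"
    then obtain z where z1: "z \<in> set (drop (Suc s) pu)" and z2: "z \<in> set (drop s pv)" unfolding P2_def by auto
    obtain a where a: "Suc s \<le> a" "a < length pu" "pu ! a = z" using z1 in_set_drop_nth by metis
    obtain b where b: "s \<le> b" "b < length pv" "pv ! b = z" using z2 in_set_drop_nth by metis
    have "a = b" using geo_nth(1)[OF pu a(2)] geo_nth(1)[OF pv b(2)] a(3) b(3) by simp
    then have "a \<in> M" unfolding M_def using a b lpu by auto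
    then show False using smax a(1) by fastforce
  qed
  have "distinct (tl cyc)" unfolding tlc using dpu dpv disj by (auto simp: P2_def)
  then have "is_cycle V E cyc" unfolding is_cycle_def using walk len hl by auto
  then show False using no_cycle by blast
qed

lemma cross: assumes ab: "E a b" and e: "E u v" and h1: "d a u < d a v" and h2: "d b v < d b u"
  shows "a = u \<and> b = v"
proof -
  have V: "a \<in> V" "b \<in> V" "u \<in> V" "v \<in> V" using E_facts ab e by auto
  define k where "k = d a u"
  have dav: "d a v = Suc k" using d_adj[OF e V(1)] h1 k_def by simp
  define m where "m = d b v"
  have dbu: "d b u = Suc m" using d_adj[OF E_sym[OF e] V(2)] h2 m_def by simp
  have "d b u \<le> d b a + d a u" using d_tri V by blast
  moreover have "d a v \<le> d a b + d b v" using d_tri V by blast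
  moreover have "d b a = 1" "d a b = 1" using d_edge ab E_sym by auto
  ultimately have mk: "m = k" using dav dbu k_def m_def by simp
  show ?thesis
  proof (cases "k = 0")
    case True
    then show ?thesis using d_zero V k_def m_def mk by metis
  next
    case False
    obtain pa where pa: "geo a u pa" using geo_ex V by blast
    obtain pb where pb: "geo b v pb" using geo_ex V by blast
    have lpa: "length pa = Suc k" and lpb: "length pb = Suc k" using pa pb mk unfolding geo_def k_def m_def by auto
    define cyc where "cyc = pa @ rev pb @ [a]"
    have dpa: "distinct pa" using geo_distinct[OF pa] .
    have dpb: "distinct pb" using geo_distinct[OF pb] .
    have pane: "pa \<noteq> []" and pbne: "pb \<noteq> []" using lpa lpb by auto
    have wpa: "wk a u pa" and wpb: "wk b v pb" using pa pb geo_def by auto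
    have walk: "is_walk V E cyc"
      unfolding is_walk_succ cyc_def using pane pbne wpa wpb succ_rev_E V e ab
      by (auto simp: wk_def2 successively_append_iff hd_rev last_rev E_sym)
    have len: "length cyc \<ge> 4" unfolding cyc_def using lpa lpb False by simp
    have hl: "hd cyc = last cyc" unfolding cyc_def using pane wpa by (simp add: wk_def2)
    have anb: "a \<notin> set pb"
    proof
      assume "a \<in> set pb"
      then obtain t where t: "t < length pb" "pb ! t = a" by (auto simp: in_set_conv_nth)
      have "d b a = t" "d a v = m - t" using geo_nth[OF pb t(1)] t(2) m_def by auto
      then show False using dav mk by simp
    qed
    have disj: "set pa \<inter> set pb = {}"
    proof (rule ccontr)
      assume "set pa \<inter> set pb \<noteq> {}"
      then obtain z where z1: "z \<in> set pa" and z2: "z \<in> set pb" by auto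
      obtain s where s: "s < length pa" "pa ! s = z" using z1 by (auto simp: in_set_conv_nth)
      obtain t where t: "t < length pb" "pb ! t = z" using z2 by (auto simp: in_set_conv_nth)
      have zV: "z \<in> V" using z1 geo_V[OF pa] by auto
      have 1: "d a z = s" "d z u = k - s" using geo_nth[OF pa s(1)] s(2) k_def by auto
      have 2: "d b z = t" "d z v = m - t" using geo_nth[OF pb t(1)] t(2) m_def by auto
      have "d a v \<le> d a z + d z v" using d_tri V zV by blast
      moreover have "d b u \<le> d b z + d z u" using d_tri V zV by blast
      ultimately show False using 1 2 dav dbu mk s t lpa lpb by linarith
    qed
    have tlc: "tl cyc = tl pa @ rev pb @ [a]" unfolding cyc_def using pane by simp
    have "a \<notin> set (tl pa)" using dpa pane wpa unfolding wk_def2 by (cases pa) auto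
    have "set (tl pa) \<subseteq> set pa" by (cases pa) auto
    then have "distinct (tl cyc)" unfolding tlc using dpa dpb disj anb \<open>a \<notin> set (tl pa)\<close>
      by (auto simp: distinct_tl)
    then have "is_cycle V E cyc" unfolding is_cycle_def using walk len hl by auto
    then show ?thesis using no_cycle by blast
  qed
qed

definition S :: "'a \<Rightarrow> 'a \<Rightarrow> 'a \<Rightarrow> bool" where "S u v x \<longleftrightarrow> d x u < d x v"

lemma sepchange: assumes e: "E u v" and ab: "E a b" and ne: "S u v a \<noteq> S u v b"
  shows "(a = u \<and> b = v) \<or> (a = v \<and> b = u)"
proof -
  have V: "a \<in> V" "b \<in> V" using E_facts ab by auto
  show ?thesis
  proof (cases "S u v a")
    case True
    then have "d a u < d a v" "d b v < d b u" using ne bip[OF e V(2)] unfolding S_def by auto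
    then show ?thesis using cross[OF ab e] by blast
  next
    case False
    then have "d b u < d b v" "d a v < d a u" using ne bip[OF e V(1)] unfolding S_def by auto
    then show ?thesis using cross[OF E_sym[OF ab] e] by blast
  qed
qed

lemma S_ends: assumes "E u v" shows "S u v u" "\<not> S u v v"
  using d_edge[OF assms] d_edge[OF E_sym[OF assms]] d_refl E_facts[OF assms] unfolding S_def by auto

lemma geo_change: assumes g: "geo x y ws" and e: "E u v" and t: "t < d x y"
  and ch: "S u v (ws ! t) \<noteq> S u v (ws ! Suc t)"
  shows "(ws ! t = u \<and> ws ! Suc t = v) \<or> (ws ! t = v \<and> ws ! Suc t = u)"
proof -
  have "Suc t < length ws" using g t unfolding geo_def by simp
  from geo_E[OF g this] show ?thesis using sepchange[OF e _ ch] by blast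
qed

lemma geo_change_unique: assumes g: "geo x y ws" and e: "E u v"
  and t1: "t1 < d x y" and t2: "t2 < d x y"
  and c1: "S u v (ws ! t1) \<noteq> S u v (ws ! Suc t1)"
  and c2: "S u v (ws ! t2) \<noteq> S u v (ws ! Suc t2)"
  shows "t1 = t2"
proof -
  have len: "length ws = Suc (d x y)" using g geo_def by auto
  have dist: "distinct ws" using geo_distinct[OF g] .
  have l: "t1 < length ws" "Suc t1 < length ws" "t2 < length ws" "Suc t2 < length ws" using len t1 t2 by auto
  have uv: "u \<noteq> v" using E_facts e by auto
  from geo_change[OF g e t1 c1] geo_change[OF g e t2 c2] uv
  have "(ws ! t1 = ws ! t2 \<and> ws ! Suc t1 = ws ! Suc t2) \<or> (ws ! t1 = ws ! Suc t2 \<and> ws ! Suc t1 = ws ! t2)"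
    by auto
  then show ?thesis
  proof
    assume "ws ! t1 = ws ! t2 \<and> ws ! Suc t1 = ws ! Suc t2"
    then show ?thesis using nth_eq_iff_index_eq[OF dist l(1) l(3)] by simp
  next
    assume h: "ws ! t1 = ws ! Suc t2 \<and> ws ! Suc t1 = ws ! t2"
    have "t1 = Suc t2" using nth_eq_iff_index_eq[OF dist l(1) l(4)] h by simp
    moreover have "Suc t1 = t2" using nth_eq_iff_index_eq[OF dist l(2) l(3)] h by simp
    ultimately show ?thesis by simp
  qed
qed

lemma geo_const: assumes g: "geo x y ws" and e: "E u v" and same: "S u v x = S u v y"
  and t: "t \<le> d x y"
  shows "S u v (ws ! t) = S u v x"
proof (rule ccontr)
  assume ne: "S u v (ws ! t) \<noteq> S u v x"
  have x: "ws ! 0 = x" and y: "ws ! d x y = y" using geo_hd[OF g] geo_last[OF g] by auto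
  obtain s1 where s1: "0 \<le> s1" "s1 < t" "S u v (ws ! s1) \<noteq> S u v (ws ! Suc s1)"
    using change_pos[of "\<lambda>i. S u v (ws ! i)" 0 t] ne x by auto
  obtain s2 where s2: "t \<le> s2" "s2 < d x y" "S u v (ws ! s2) \<noteq> S u v (ws ! Suc s2)"
    using change_pos[of "\<lambda>i. S u v (ws ! i)" t "d x y"] ne y same t by auto
  have "s1 = s2" using geo_change_unique[OF g e _ _ s1(3) s2(3)] s1 s2 by auto
  then show False using s1 s2 by simp
qed

lemma geo_sep_on: assumes g: "geo x y ws" and e: "E u v" and ne: "S u v x \<noteq> S u v y"
  shows "u \<in> set ws"
proof -
  have x: "ws ! 0 = x" and y: "ws ! d x y = y" using geo_hd[OF g] geo_last[OF g] by auto
  obtain s where s: "s < d x y" "S u v (ws ! s) \<noteq> S u v (ws ! Suc s)"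
    using change_pos[of "\<lambda>i. S u v (ws ! i)" 0 "d x y"] ne x y by auto
  have len: "length ws = Suc (d x y)" using g geo_def by auto
  from geo_change[OF g e s] show ?thesis using len s(1)
    by (metis Suc_mono less_SucI nth_mem)
qed

end

context tree_ctx begin

definition Edges :: "('a \<times> 'a) set" where "Edges = {(u, v). E u v \<and> u < v}"

lemma finite_Edges: "finite Edges"
proof -
  have "Edges \<subseteq> V \<times> V" unfolding Edges_def using E_facts by auto
  then show ?thesis using finV finite_subset by blast
qed

definition sepE :: "'a \<times> 'a \<Rightarrow> 'a \<Rightarrow> 'a \<Rightarrow> bool" where
  "sepE e x y \<longleftrightarrow> S (fst e) (snd e) x \<noteq> S (fst e) (snd e) y"

lemma d_count: assumes x: "x \<in> V" and y: "y \<in> V"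
  shows "d x y = card {e \<in> Edges. sepE e x y}"
proof -
  obtain ws where g: "geo x y ws" using geo_ex x y by blast
  define n where "n = d x y"
  have len: "length ws = Suc n" using g geo_def n_def by auto
  have dist: "distinct ws" using geo_distinct[OF g] .
  have w0: "ws ! 0 = x" and wn: "ws ! n = y" using geo_hd[OF g] geo_last[OF g] n_def by auto
  define f where "f t = (min (ws ! t) (ws ! Suc t), max (ws ! t) (ws ! Suc t))" for t
  have wV: "\<And>t. t < length ws \<Longrightarrow> ws ! t \<in> V" using geo_V[OF g] nth_mem by blast
  have fin: "f t \<in> {e \<in> Edges. sepE e x y}" if t: "t < n" for t
  proof -
    have l: "t < length ws" "Suc t < length ws" using t len by auto
    have E1: "E (ws ! t) (ws ! Suc t)" using geo_E[OF g l(2)] .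
    have ne: "ws ! t \<noteq> ws ! Suc t" using E_facts E1 by auto
    have dxa: "d x (ws ! t) = t" and dxb: "d x (ws ! Suc t) = Suc t"
      using geo_nth(1)[OF g l(1)] geo_nth(1)[OF g l(2)] by auto
    have dya: "d y (ws ! t) = n - t" and dyb: "d y (ws ! Suc t) = n - Suc t"
      using geo_nth(2)[OF g l(1)] geo_nth(2)[OF g l(2)] d_sym[OF wV[OF l(1)] y] d_sym[OF wV[OF l(2)] y] n_def
      by auto
    show ?thesis
    proof (cases "ws ! t < ws ! Suc t")
      case True
      then have "f t = (ws ! t, ws ! Suc t)" unfolding f_def by auto
      then show ?thesis using E1 True dxa dxb dya dyb t unfolding Edges_def sepE_def S_def by auto
    next
      case False
      then have lt: "ws ! Suc t < ws ! t" using ne by auto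
      then have "f t = (ws ! Suc t, ws ! t)" unfolding f_def by auto
      then show ?thesis using E_sym[OF E1] lt dxa dxb dya dyb t unfolding Edges_def sepE_def S_def by auto
    qed
  qed
  have inj: "inj_on f {..<n}"
  proof
    fix t1 t2 assume t1: "t1 \<in> {..<n}" and t2: "t2 \<in> {..<n}" and eq: "f t1 = f t2"
    have c1: "sepE (f t1) x y" "f t1 \<in> Edges" using fin t1 by auto
    have E1: "E (fst (f t1)) (snd (f t1))" using c1 unfolding Edges_def by auto
    have ch: "S (fst (f t1)) (snd (f t1)) (ws ! t) \<noteq> S (fst (f t1)) (snd (f t1)) (ws ! Suc t)"
      if "t < n" "f t = f t1" for t
    proof -
      have l: "t < length ws" "Suc t < length ws" using that len by auto
      have E2: "E (ws ! t) (ws ! Suc t)" using geo_E[OF g l(2)] .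
      have "{fst (f t1), snd (f t1)} = {ws ! t, ws ! Suc t}" using that(2)[symmetric] unfolding f_def
        by (auto simp: min_def max_def)
      then show ?thesis using S_ends[OF E1] S_ends[OF E2] E_facts[OF E1] by (auto simp: doubleton_eq_iff)
    qed
    show "t1 = t2"
      using geo_change_unique[OF g E1, of t1 t2] ch[of t1] ch[of t2] t1 t2 eq n_def by auto
  qed
  have surj: "{e \<in> Edges. sepE e x y} \<subseteq> f ` {..<n}"
  proof
    fix e assume e: "e \<in> {e \<in> Edges. sepE e x y}"
    obtain u v where uv: "e = (u, v)" "E u v" "u < v" using e unfolding Edges_def by auto
    have "S u v (ws ! 0) \<noteq> S u v (ws ! n)" using e uv w0 wn unfolding sepE_def by auto
    then obtain s where s: "s < n" "S u v (ws ! s) \<noteq> S u v (ws ! Suc s)"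
      using change_pos[of "\<lambda>i. S u v (ws ! i)" 0 n] by auto
    from geo_change[OF g uv(2) _ s(2)] s(1) n_def
    have "(ws ! s = u \<and> ws ! Suc s = v) \<or> (ws ! s = v \<and> ws ! Suc s = u)" by auto
    then have "f s = e" using uv unfolding f_def by auto
    then show "e \<in> f ` {..<n}" using s by auto
  qed
  have "f ` {..<n} = {e \<in> Edges. sepE e x y}" using surj fin by auto
  then have "card {e \<in> Edges. sepE e x y} = card {..<n}" using card_image[OF inj] by simp
  then show ?thesis using n_def by simp
qed

end

context tree_ctx begin
lemma compat: assumes e: "(u, v) \<in> Edges" and f: "(u', v') \<in> Edges" and ne: "(u, v) \<noteq> (u', v')"
  shows "\<exists>\<alpha> \<beta>. \<forall>z\<in>V. S u v z = \<alpha> \<longrightarrow> S u' v' z \<noteq> \<beta>"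
proof -
  have Ee: "E u v" "u < v" and Ef: "E u' v'" "u' < v'" using e f unfolding Edges_def by auto
  have a: "S u v u' = S u v v'"
  proof (rule ccontr)
    assume "S u v u' \<noteq> S u v v'"
    from sepchange[OF Ee(1) Ef(1) this] have "(u' = u \<and> v' = v) \<or> (u' = v \<and> v' = u)" .
    then show False using ne Ee(2) Ef(2) by auto
  qed
  have b: "S u' v' u = S u' v' v"
  proof (rule ccontr)
    assume "S u' v' u \<noteq> S u' v' v"
    from sepchange[OF Ef(1) Ee(1) this] have "(u = u' \<and> v = v') \<or> (u = v' \<and> v = u')" .
    then show False using ne Ee(2) Ef(2) by auto
  qed
  show ?thesis
  proof (intro exI ballI impI)
    fix z assume z: "z \<in> V" and sz: "S u v z = (\<not> S u v u')"
    show "S u' v' z \<noteq> (\<not> S u' v' u)"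
    proof
      assume sz2: "S u' v' z = (\<not> S u' v' u)"
      define w where "w = (if S u' v' z = S u' v' u' then u' else v')"
      have wV: "w \<in> V" using E_facts[OF Ef(1)] w_def by auto
      have sfw: "S u' v' w = S u' v' z" using S_ends[OF Ef(1)] w_def by auto
      have sew: "S u v w = S u v u'" using a w_def by auto
      obtain ws where g: "geo z w ws" using geo_ex z wV by blast
      have "S u v z \<noteq> S u v w" using sz sew by auto
      from geo_sep_on[OF g Ee(1) this] obtain t where t: "t < length ws" "ws ! t = u"
        by (auto simp: in_set_conv_nth)
      have "t \<le> d z w" using t g geo_def by auto
      from geo_const[OF g Ef(1) sfw[symmetric] this] t(2) have "S u' v' u = S u' v' z" by simp
      then show False using sz2 by simp
    qed
  qed
qed

lemma no_all4: assumes e: "e \<in> Edges" and f: "f \<in> Edges"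
  and x: "x1 \<in> V" "x2 \<in> V" "x3 \<in> V" "x4 \<in> V"
  and h: "S (fst e) (snd e) x1 = S (fst e) (snd e) x2" "S (fst e) (snd e) x3 = S (fst e) (snd e) x4"
         "S (fst e) (snd e) x1 \<noteq> S (fst e) (snd e) x3"
         "S (fst f) (snd f) x1 = S (fst f) (snd f) x3" "S (fst f) (snd f) x2 = S (fst f) (snd f) x4"
         "S (fst f) (snd f) x1 \<noteq> S (fst f) (snd f) x2"
  shows "e = f"
proof (rule ccontr)
  assume ne: "e \<noteq> f"
  obtain u v u' v' where uv: "e = (u, v)" "f = (u', v')" by (cases e, cases f) auto
  from compat[of u v u' v'] e f ne uv obtain \<alpha> \<beta> where ab: "\<forall>z\<in>V. S u v z = \<alpha> \<longrightarrow> S u' v' z \<noteq> \<beta>"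
    by auto
  define p where "p = S u v x1"
  define q where "q = S u' v' x1"
  have f2: "S u v x2 = p" "S u' v' x2 = (\<not> q)" using h uv unfolding p_def q_def by auto
  have f3: "S u v x3 = (\<not> p)" "S u' v' x3 = q" using h uv unfolding p_def q_def by auto
  have f4: "S u v x4 = (\<not> p)" "S u' v' x4 = (\<not> q)" using h uv f2 f3 unfolding p_def q_def by auto
  have n1: "\<not> (p = \<alpha> \<and> q = \<beta>)" using ab x(1) unfolding p_def q_def by blast
  have n2: "\<not> (p = \<alpha> \<and> (\<not> q) = \<beta>)" using ab x(2) f2 by metis
  have n3: "\<not> ((\<not> p) = \<alpha> \<and> q = \<beta>)" using ab x(3) f3 by metis
  have n4: "\<not> ((\<not> p) = \<alpha> \<and> (\<not> q) = \<beta>)" using ab x(4) f4 by metis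
  show False using n1 n2 n3 n4 by (cases \<alpha>; cases \<beta>; cases p; cases q) simp_all
qed

end

context tree_ctx begin
lemma bool_id1: fixes a b c dd :: bool
  shows "(if a \<noteq> dd then 1 else 0) + (if b \<noteq> c then 1 else 0) =
    (if (a \<noteq> b) \<noteq> (c \<noteq> dd) then 1 else 0) + 2 * (if (a = b \<and> c = dd \<and> a \<noteq> c) \<or> (a = c \<and> b = dd \<and> a \<noteq> b) then 1 else (0::real))"
  by (cases a; cases b; cases c; cases dd) simp_all

lemma bool_id2: fixes a b c dd :: bool
  shows "(if a \<noteq> c then 1 else 0) + (if b \<noteq> dd then 1 else 0) =
    (if (a \<noteq> b) \<noteq> (c \<noteq> dd) then 1 else 0) + 2 * (if (a = b \<and> c = dd \<and> a \<noteq> c) \<or> (a = dd \<and> b = c \<and> a \<noteq> b) then 1 else (0::real))"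
  by (cases a; cases b; cases c; cases dd) simp_all

lemma bool_id3: fixes a b c dd :: bool
  shows "(if a \<noteq> b then 1 else 0) + (if c \<noteq> dd then 1 else 0) =
    (if (a \<noteq> b) \<noteq> (c \<noteq> dd) then 1 else 0) + 2 * (if (a = c \<and> b = dd \<and> a \<noteq> b) \<or> (a = dd \<and> b = c \<and> a \<noteq> b) then 1 else (0::real))"
  by (cases a; cases b; cases c; cases dd) simp_all

lemma real_card_sum: "finite F \<Longrightarrow> real (card {e \<in> F. P e}) = (\<Sum>e\<in>F. if P e then 1 else 0)"
  by (simp add: sum.inter_filter[symmetric])

lemma entry: assumes V: "i \<in> V" "j \<in> V" "k \<in> V" "l \<in> V"
  shows "min4pc_entry V E (i, j) (k, l) = real (card {e \<in> Edges. sepE e i j \<noteq> sepE e k l})"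
proof -
  let ?S = "\<lambda>e x. S (fst e) (snd e) x"
  define ind :: "bool \<Rightarrow> real" where "ind b = (if b then 1 else 0)" for b
  have dd: "real (d x y) = (\<Sum>e\<in>Edges. ind (sepE e x y))" if "x \<in> V" "y \<in> V" for x y
    using d_count[OF that] real_card_sum[OF finite_Edges] unfolding ind_def by simp
  define T1 where "T1 e \<longleftrightarrow> ?S e i = ?S e j \<and> ?S e k = ?S e l \<and> ?S e i \<noteq> ?S e k" for e
  define T2 where "T2 e \<longleftrightarrow> ?S e i = ?S e k \<and> ?S e j = ?S e l \<and> ?S e i \<noteq> ?S e j" for e
  define T3 where "T3 e \<longleftrightarrow> ?S e i = ?S e l \<and> ?S e j = ?S e k \<and> ?S e i \<noteq> ?S e j" for e
  define X where "X = (\<Sum>e\<in>Edges. ind (sepE e i j \<noteq> sepE e k l))"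
  define C12 where "C12 = (\<Sum>e\<in>Edges. ind (T1 e \<or> T2 e))"
  define C13 where "C13 = (\<Sum>e\<in>Edges. ind (T1 e \<or> T3 e))"
  define C23 where "C23 = (\<Sum>e\<in>Edges. ind (T2 e \<or> T3 e))"
  have s1: "real (d i l) + real (d j k) = X + 2 * C12"
  proof -
    have "real (d i l) + real (d j k) = (\<Sum>e\<in>Edges. ind (sepE e i l) + ind (sepE e j k))"
      using dd V by (simp add: sum.distrib)
    also have "\<dots> = (\<Sum>e\<in>Edges. ind (sepE e i j \<noteq> sepE e k l) + 2 * ind (T1 e \<or> T2 e))"
      unfolding ind_def sepE_def T1_def T2_def by (rule sum.cong[OF refl], rule bool_id1)
    finally show ?thesis by (simp add: X_def C12_def sum.distrib sum_distrib_left)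
  qed
  have s2: "real (d i k) + real (d j l) = X + 2 * C13"
  proof -
    have "real (d i k) + real (d j l) = (\<Sum>e\<in>Edges. ind (sepE e i k) + ind (sepE e j l))"
      using dd V by (simp add: sum.distrib)
    also have "\<dots> = (\<Sum>e\<in>Edges. ind (sepE e i j \<noteq> sepE e k l) + 2 * ind (T1 e \<or> T3 e))"
      unfolding ind_def sepE_def T1_def T3_def by (rule sum.cong[OF refl], rule bool_id2)
    finally show ?thesis by (simp add: X_def C13_def sum.distrib sum_distrib_left)
  qed
  have s3: "real (d i j) + real (d k l) = X + 2 * C23"
  proof -
    have "real (d i j) + real (d k l) = (\<Sum>e\<in>Edges. ind (sepE e i j) + ind (sepE e k l))"
      using dd V by (simp add: sum.distrib)
    also have "\<dots> = (\<Sum>e\<in>Edges. ind (sepE e i j \<noteq> sepE e k l) + 2 * ind (T2 e \<or> T3 e))"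
      unfolding ind_def sepE_def T2_def T3_def by (rule sum.cong[OF refl], rule bool_id3)
    finally show ?thesis by (simp add: X_def C23_def sum.distrib sum_distrib_left)
  qed
  have nn: "C12 \<ge> 0" "C13 \<ge> 0" "C23 \<ge> 0" unfolding C12_def C13_def C23_def ind_def
    by (auto intro: sum_nonneg)
  have ex: "\<exists>e\<in>Edges. P e" if "(\<Sum>e\<in>Edges. ind (P e)) \<noteq> 0" for P
  proof (rule ccontr)
    assume "\<not> (\<exists>e\<in>Edges. P e)"
    then have "(\<Sum>e\<in>Edges. ind (P e)) = 0" unfolding ind_def by (intro sum.neutral) auto
    then show False using that by simp
  qed
  have t12: False if "e \<in> Edges" "f \<in> Edges" "T1 e" "T2 f" for e f
  proof -
    have "e = f" using that(3,4) unfolding T1_def T2_def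
      by (intro no_all4[OF that(1,2) V(1,2,3,4)]) blast+
    then show False using that(3,4) unfolding T1_def T2_def by blast
  qed
  have t13: False if "e \<in> Edges" "f \<in> Edges" "T1 e" "T3 f" for e f
  proof -
    have "e = f" using that(3,4) unfolding T1_def T3_def
      by (intro no_all4[OF that(1,2) V(1,2,4,3)]) blast+
    then show False using that(3,4) unfolding T1_def T3_def by blast
  qed
  have t23: False if "e \<in> Edges" "f \<in> Edges" "T2 e" "T3 f" for e f
  proof -
    have "e = f" using that(3,4) unfolding T2_def T3_def
      by (intro no_all4[OF that(1,2) V(1,3,4,2)]) blast+
    then show False using that(3,4) unfolding T2_def T3_def by blast
  qed
  have zero: "C12 = 0 \<or> C13 = 0 \<or> C23 = 0"
  proof (rule ccontr)
    assume "\<not> (C12 = 0 \<or> C13 = 0 \<or> C23 = 0)"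
    then obtain e1 e2 e3 where e1: "e1 \<in> Edges" "T1 e1 \<or> T2 e1" and e2: "e2 \<in> Edges" "T1 e2 \<or> T3 e2"
      and e3: "e3 \<in> Edges" "T2 e3 \<or> T3 e3"
      using ex[of "\<lambda>e. T1 e \<or> T2 e"] ex[of "\<lambda>e. T1 e \<or> T3 e"] ex[of "\<lambda>e. T2 e \<or> T3 e"]
      unfolding C12_def C13_def C23_def by blast
    show False
    proof (cases "T1 e1")
      case True
      from e3(2) show False using t12[OF e1(1) e3(1) True] t13[OF e1(1) e3(1) True] by blast
    next
      case False
      then have T2: "T2 e1" using e1 by blast
      from e2(2) show False using t12[OF e2(1) e1(1) _ T2] t23[OF e1(1) e2(1) T2] by blast
    qed
  qed
  have "min4pc_entry V E (i, j) (k, l) = min (real (d i l) + real (d j k)) (min (real (d i k) + real (d j l)) (real (d i j) + real (d k l)))"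
    unfolding min4pc_entry_def by simp
  also have "\<dots> = X" unfolding s1 s2 s3 using nn zero by (elim disjE) (simp_all add: min_def)
  also have "X = real (card {e \<in> Edges. sepE e i j \<noteq> sepE e k l})"
    unfolding X_def ind_def using real_card_sum[OF finite_Edges] by simp
  finally show ?thesis .
qed

end

lemma cut_form1:
  fixes w :: "'b \<Rightarrow> real" and g :: "'b \<Rightarrow> bool"
  assumes X: "finite X"
  shows "(\<Sum>a\<in>X. \<Sum>b\<in>X. w a * w b * (if g a \<noteq> g b then 1 else 0))
       = 2 * (\<Sum>a\<in>{a\<in>X. g a}. w a) * ((\<Sum>a\<in>X. w a) - (\<Sum>a\<in>{a\<in>X. g a}. w a))"
proof -
  define W1 where "W1 = (\<Sum>a\<in>{a\<in>X. g a}. w a)"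
  define W0 where "W0 = (\<Sum>a\<in>{a\<in>X. \<not> g a}. w a)"
  have tot: "(\<Sum>a\<in>X. w a) = W1 + W0" unfolding W1_def W0_def
    using sum.inter_filter[OF X, of w g] sum.inter_filter[OF X, of w "\<lambda>a. \<not> g a"]
    by (simp add: sum.distrib[symmetric] if_distrib cong: sum.cong) (rule sum.cong; simp)
  have inner: "(\<Sum>b\<in>X. w a * w b * (if g a \<noteq> g b then 1 else 0)) = w a * (if g a then W0 else W1)" for a
  proof -
    have "(\<Sum>b\<in>X. w a * w b * (if g a \<noteq> g b then 1 else 0)) = w a * (\<Sum>b\<in>X. if g a \<noteq> g b then w b else 0)"
      by (simp add: sum_distrib_left if_distrib cong: if_cong)
    also have "(\<Sum>b\<in>X. if g a \<noteq> g b then w b else 0) = (\<Sum>b\<in>{b\<in>X. g a \<noteq> g b}. w b)"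
      using sum.inter_filter[OF X, of w "\<lambda>b. g a \<noteq> g b"] by simp
    also have "\<dots> = (if g a then W0 else W1)" unfolding W0_def W1_def by (cases "g a") auto
    finally show ?thesis .
  qed
  have "(\<Sum>a\<in>X. \<Sum>b\<in>X. w a * w b * (if g a \<noteq> g b then 1 else 0)) = (\<Sum>a\<in>X. w a * (if g a then W0 else W1))"
    using inner by simp
  also have "\<dots> = (\<Sum>a\<in>X. (if g a then w a * W0 else 0) + (if \<not> g a then w a * W1 else 0))"
    by (intro sum.cong refl) simp
  also have "\<dots> = (\<Sum>a\<in>X. if g a then w a * W0 else 0) + (\<Sum>a\<in>X. if \<not> g a then w a * W1 else 0)"
    by (rule sum.distrib)
  also have "\<dots> = W1 * W0 + W0 * W1"
    using sum.inter_filter[OF X, of "\<lambda>a. w a * W0" g] sum.inter_filter[OF X, of "\<lambda>a. w a * W1" "\<lambda>a. \<not> g a"]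
    unfolding W1_def W0_def by (simp add: sum_distrib_right if_distrib cong: if_cong)
  finally show ?thesis unfolding tot W1_def[symmetric] by simp
qed

lemma cut_form:
  fixes w :: "'b \<Rightarrow> real" and g :: "'e \<Rightarrow> 'b \<Rightarrow> bool"
  assumes X: "finite X" and F: "finite F"
    and m: "\<And>a b. a \<in> X \<Longrightarrow> b \<in> X \<Longrightarrow> m a b = (\<Sum>e\<in>F. if g e a \<noteq> g e b then 1 else 0)"
  shows "(\<Sum>a\<in>X. \<Sum>b\<in>X. w a * w b * m a b)
       = (\<Sum>e\<in>F. 2 * (\<Sum>a\<in>{a\<in>X. g e a}. w a) * ((\<Sum>a\<in>X. w a) - (\<Sum>a\<in>{a\<in>X. g e a}. w a)))"
proof -
  have "(\<Sum>a\<in>X. \<Sum>b\<in>X. w a * w b * m a b) = (\<Sum>a\<in>X. \<Sum>b\<in>X. \<Sum>e\<in>F. w a * w b * (if g e a \<noteq> g e b then 1 else 0))"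
    using m by (simp add: sum_distrib_left)
  also have "\<dots> = (\<Sum>e\<in>F. \<Sum>a\<in>X. \<Sum>b\<in>X. w a * w b * (if g e a \<noteq> g e b then 1 else 0))"
    by (simp add: sum.swap[of _ F] sum.swap[of _ F X])
  also have "\<dots> = (\<Sum>e\<in>F. 2 * (\<Sum>a\<in>{a\<in>X. g e a}. w a) * ((\<Sum>a\<in>X. w a) - (\<Sum>a\<in>{a\<in>X. g e a}. w a)))"
    using cut_form1[OF X] by simp
  finally show ?thesis .
qed

lemma form_nonpos0:
  fixes w :: "'b \<Rightarrow> real" and g :: "'e \<Rightarrow> 'b \<Rightarrow> bool"
  assumes X: "finite X" and F: "finite F"
    and m: "\<And>a b. a \<in> X \<Longrightarrow> b \<in> X \<Longrightarrow> m a b = (\<Sum>e\<in>F. if g e a \<noteq> g e b then 1 else 0)"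
    and s: "(\<Sum>a\<in>X. w a) = 0"
  shows "(\<Sum>a\<in>X. \<Sum>b\<in>X. w a * w b * m a b) \<le> 0"
proof -
  have "(\<Sum>a\<in>X. \<Sum>b\<in>X. w a * w b * m a b) = (\<Sum>e\<in>F. 2 * (\<Sum>a\<in>{a\<in>X. g e a}. w a) * (0 - (\<Sum>a\<in>{a\<in>X. g e a}. w a)))"
    using cut_form[OF X F m, where w=w] s by simp
  also have "\<dots> \<le> 0" by (rule sum_nonpos) (simp add: mult_le_0_iff)
  finally show ?thesis .
qed

lemma int_prod_le: "(k::int) * (1 - k) \<le> 0"
proof (cases "k \<le> 0")
  case True then show ?thesis by (simp add: mult_nonpos_nonneg)
next
  case False then show ?thesis by (simp add: mult_nonneg_nonpos)
qed

lemma form_nonpos1: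
  fixes x :: "'b \<Rightarrow> int" and g :: "'e \<Rightarrow> 'b \<Rightarrow> bool"
  assumes X: "finite X" and F: "finite F"
    and m: "\<And>a b. a \<in> X \<Longrightarrow> b \<in> X \<Longrightarrow> m a b = (\<Sum>e\<in>F. if g e a \<noteq> g e b then 1 else 0)"
    and s: "(\<Sum>a\<in>X. x a) = 1"
  shows "(\<Sum>a\<in>X. \<Sum>b\<in>X. real_of_int (x a) * real_of_int (x b) * m a b) \<le> 0"
proof -
  have s': "(\<Sum>a\<in>X. real_of_int (x a)) = 1" using s by (metis of_int_1 of_int_sum)
  have "(\<Sum>a\<in>X. \<Sum>b\<in>X. real_of_int (x a) * real_of_int (x b) * m a b)
     = (\<Sum>e\<in>F. 2 * (\<Sum>a\<in>{a\<in>X. g e a}. real_of_int (x a)) * (1 - (\<Sum>a\<in>{a\<in>X. g e a}. real_of_int (x a))))"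
    using cut_form[OF X F m, where w="\<lambda>a. real_of_int (x a)"] s' by simp
  also have "\<dots> \<le> 0"
  proof (rule sum_nonpos)
    fix e
    define k where "k = (\<Sum>a\<in>{a\<in>X. g e a}. x a)"
    have "(\<Sum>a\<in>{a\<in>X. g e a}. real_of_int (x a)) = real_of_int k" unfolding k_def by simp
    moreover have "real_of_int k * (1 - real_of_int k) \<le> 0"
      using int_prod_le[of k] by (metis of_int_1 of_int_diff of_int_le_0_iff of_int_mult)
    ultimately show "2 * (\<Sum>a\<in>{a\<in>X. g e a}. real_of_int (x a)) * (1 - (\<Sum>a\<in>{a\<in>X. g e a}. real_of_int (x a))) \<le> 0"
      by simp
  qed
  finally show ?thesis .
qed

context tree_ctx begin

definition phi :: "'a \<times> 'a \<Rightarrow> 'a \<times> 'a \<Rightarrow> bool" where "phi e p = sepE e (fst p) (snd p)"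

lemma pairs2_V: "p \<in> pairs2 V \<Longrightarrow> fst p \<in> V \<and> snd p \<in> V \<and> fst p < snd p"
  unfolding pairs2_def by auto

lemma finite_pairs2: "finite (pairs2 V)"
proof -
  have "pairs2 V \<subseteq> V \<times> V" unfolding pairs2_def by auto
  then show ?thesis using finV finite_subset by blast
qed

lemma m_cut: assumes "p \<in> pairs2 V" "q \<in> pairs2 V"
  shows "min4pc_entry V E p q = (\<Sum>e\<in>Edges. if phi e p \<noteq> phi e q then 1 else 0)"
proof -
  obtain i j k l where pq: "p = (i, j)" "q = (k, l)" by (cases p, cases q) auto
  have V: "i \<in> V" "j \<in> V" "k \<in> V" "l \<in> V" using pairs2_V assms pq by auto
  show ?thesis unfolding pq entry[OF V] real_card_sum[OF finite_Edges] phi_def by simp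
qed

lemma m_diag: "p \<in> pairs2 V \<Longrightarrow> min4pc_entry V E p p = 0"
  using m_cut by simp

lemma hyper: "hypermetric (pairs2 V) (min4pc_entry V E)"
  unfolding hypermetric_def
proof (intro allI impI)
  fix x :: "'a \<times> 'a \<Rightarrow> int" assume s: "(\<Sum>a\<in>pairs2 V. x a) = 1"
  have "(\<Sum>a\<in>pairs2 V. \<Sum>b\<in>pairs2 V. if a \<noteq> b then real_of_int (x a * x b) * min4pc_entry V E a b else 0)
      = (\<Sum>a\<in>pairs2 V. \<Sum>b\<in>pairs2 V. real_of_int (x a) * real_of_int (x b) * min4pc_entry V E a b)"
    by (intro sum.cong refl) (auto simp: m_diag)
  also have "\<dots> \<le> 0" by (rule form_nonpos1[OF finite_pairs2 finite_Edges m_cut s])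
  finally show "(\<Sum>a\<in>pairs2 V. \<Sum>b\<in>pairs2 V. if a \<noteq> b then real_of_int (x a * x b) * min4pc_entry V E a b else 0) / 2 \<le> 0"
    by simp
qed

lemma negtype: "negative_type (pairs2 V) (min4pc_entry V E)"
  unfolding negative_type_def
proof (intro allI impI)
  fix x :: "'a \<times> 'a \<Rightarrow> int" assume s: "(\<Sum>a\<in>pairs2 V. x a) = 0"
  have s': "(\<Sum>a\<in>pairs2 V. real_of_int (x a)) = 0" using s by (metis of_int_0 of_int_sum)
  have "(\<Sum>a\<in>pairs2 V. \<Sum>b\<in>pairs2 V. if a \<noteq> b then real_of_int (x a * x b) * min4pc_entry V E a b else 0)
      = (\<Sum>a\<in>pairs2 V. \<Sum>b\<in>pairs2 V. real_of_int (x a) * real_of_int (x b) * min4pc_entry V E a b)"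
    by (intro sum.cong refl) (auto simp: m_diag)
  also have "\<dots> \<le> 0" by (rule form_nonpos0[OF finite_pairs2 finite_Edges m_cut s'])
  finally show "(\<Sum>a\<in>pairs2 V. \<Sum>b\<in>pairs2 V. if a \<noteq> b then real_of_int (x a * x b) * min4pc_entry V E a b else 0) / 2 \<le> 0"
    by simp
qed

end

lemma mult_mat_vec_sum: assumes "A \<in> carrier_mat n n" "v \<in> carrier_vec n" "i < n"
  shows "(A *\<^sub>v v) $ i = (\<Sum>j = 0..<n. A $$ (i, j) * v $ j)"
  using assms by (simp add: scalar_prod_def row_def)

lemma sym_eigen_real:
  fixes A :: "real mat"
  assumes A: "A \<in> carrier_mat n n" and n: "n > 0"
    and sym: "\<And>i j. i < n \<Longrightarrow> j < n \<Longrightarrow> A $$ (i, j) = A $$ (j, i)"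
  shows "\<exists>r v. v \<in> carrier_vec n \<and> v \<noteq> 0\<^sub>v n \<and> A *\<^sub>v v = r \<cdot>\<^sub>v v"
proof -
  define Ac where "Ac = map_mat complex_of_real A"
  have Ac: "Ac \<in> carrier_mat n n" using A by (simp add: Ac_def)
  from spectrum_non_empty[OF Ac n] obtain z where "eigenvalue Ac z" unfolding spectrum_def by auto
  then obtain vc where ev: "eigenvector Ac vc z" unfolding eigenvalue_def by auto
  then have vc: "vc \<in> carrier_vec n" "vc \<noteq> 0\<^sub>v n" "Ac *\<^sub>v vc = z \<cdot>\<^sub>v vc"
    unfolding eigenvector_def using Ac by auto
  have eq: "(\<Sum>j = 0..<n. complex_of_real (A $$ (i, j)) * vc $ j) = z * vc $ i" if i: "i < n" for i
  proof -
    have "(Ac *\<^sub>v vc) $ i = (z \<cdot>\<^sub>v vc) $ i" using vc(3) by simp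
    then show ?thesis using mult_mat_vec_sum[OF Ac vc(1) i] i vc(1) A by (simp add: Ac_def)
  qed
  define Q where "Q = (\<Sum>i = 0..<n. cnj (vc $ i) * (\<Sum>j = 0..<n. complex_of_real (A $$ (i, j)) * vc $ j))"
  define Nr where "Nr = (\<Sum>i = 0..<n. (Re (vc $ i))\<^sup>2 + (Im (vc $ i))\<^sup>2)"
  have Qz: "Q = z * complex_of_real Nr"
  proof -
    have t: "cnj (vc $ i) * (\<Sum>j = 0..<n. complex_of_real (A $$ (i, j)) * vc $ j) = z * (cnj (vc $ i) * vc $ i)"
      if "i \<in> {0..<n}" for i using eq[of i] that by simp
    have "Q = (\<Sum>i = 0..<n. z * (cnj (vc $ i) * vc $ i))" unfolding Q_def
      by (rule sum.cong[OF refl t])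
    also have "\<dots> = z * (\<Sum>i = 0..<n. complex_of_real ((Re (vc $ i))\<^sup>2 + (Im (vc $ i))\<^sup>2))"
    proof -
      have c: "cnj (vc $ i) * vc $ i = complex_of_real ((Re (vc $ i))\<^sup>2 + (Im (vc $ i))\<^sup>2)" for i
        by (metis complex_mult_cnj mult.commute)
      show ?thesis unfolding c sum_distrib_left ..
    qed
    finally show ?thesis unfolding Nr_def by simp
  qed
  have Qc: "cnj Q = Q"
  proof -
    have "cnj Q = (\<Sum>i = 0..<n. \<Sum>j = 0..<n. vc $ i * (complex_of_real (A $$ (i, j)) * cnj (vc $ j)))"
      unfolding Q_def by (simp add: sum_distrib_left)
    also have "\<dots> = (\<Sum>j = 0..<n. \<Sum>i = 0..<n. vc $ i * (complex_of_real (A $$ (i, j)) * cnj (vc $ j)))"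
      by (rule sum.swap)
    also have "\<dots> = Q" unfolding Q_def sum_distrib_left
      by (intro sum.cong refl) (simp add: sym mult.commute mult.left_commute)
    finally show ?thesis .
  qed
  have Nr_pos: "Nr > 0"
  proof -
    obtain i where i: "i < n" "vc $ i \<noteq> 0" using vc(1,2) by (metis carrier_vecD eq_vecI index_zero_vec)
    have "Re (vc $ i) \<noteq> 0 \<or> Im (vc $ i) \<noteq> 0" using i(2) complex_eq_iff by auto
    then have "(Re (vc $ i))\<^sup>2 + (Im (vc $ i))\<^sup>2 > 0" by (simp add: sum_power2_gt_zero_iff)
    moreover have "(Re (vc $ i))\<^sup>2 + (Im (vc $ i))\<^sup>2 \<le> Nr" unfolding Nr_def
      by (rule member_le_sum) (use i in auto)
    ultimately show ?thesis by linarith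
  qed
  have Imz: "Im z = 0"
  proof -
    have "Im Q = 0" using Qc by (metis cnj.sel(2) equal_neg_zero)
    then have "Im z * Nr = 0" using Qz by simp
    then show ?thesis using Nr_pos by simp
  qed
  define r where "r = Re z"
  have reeq: "(\<Sum>j = 0..<n. A $$ (i, j) * Re (vc $ j)) = r * Re (vc $ i)"
    and imeq: "(\<Sum>j = 0..<n. A $$ (i, j) * Im (vc $ j)) = r * Im (vc $ i)" if i: "i < n" for i
  proof -
    have "Re (\<Sum>j = 0..<n. complex_of_real (A $$ (i, j)) * vc $ j) = Re (z * vc $ i)" using eq[OF i] by simp
    then show "(\<Sum>j = 0..<n. A $$ (i, j) * Re (vc $ j)) = r * Re (vc $ i)" using Imz by (simp add: Re_sum r_def)
    have "Im (\<Sum>j = 0..<n. complex_of_real (A $$ (i, j)) * vc $ j) = Im (z * vc $ i)" using eq[OF i] by simp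
    then show "(\<Sum>j = 0..<n. A $$ (i, j) * Im (vc $ j)) = r * Im (vc $ i)" using Imz by (simp add: Im_sum r_def)
  qed
  obtain i0 where i0: "i0 < n" "vc $ i0 \<noteq> 0" using vc(1,2) by (metis carrier_vecD eq_vecI index_zero_vec)
  show ?thesis
  proof (cases "Re (vc $ i0) \<noteq> 0")
    case True
    define v where "v = vec n (\<lambda>i. Re (vc $ i))"
    have "v \<in> carrier_vec n" "v \<noteq> 0\<^sub>v n" using True i0 unfolding v_def by (auto simp: vec_eq_iff)
    moreover have "A *\<^sub>v v = r \<cdot>\<^sub>v v"
      by (rule eq_vecI) (use A reeq in \<open>auto simp: v_def scalar_prod_def\<close>)
    ultimately show ?thesis by blast
  next
    case False
    then have "Im (vc $ i0) \<noteq> 0" using i0 complex_eq_iff by auto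
    define v where "v = vec n (\<lambda>i. Im (vc $ i))"
    have "v \<in> carrier_vec n" "v \<noteq> 0\<^sub>v n" using \<open>Im (vc $ i0) \<noteq> 0\<close> i0 unfolding v_def by (auto simp: vec_eq_iff)
    moreover have "A *\<^sub>v v = r \<cdot>\<^sub>v v"
      by (rule eq_vecI) (use A imeq in \<open>auto simp: v_def scalar_prod_def\<close>)
    ultimately show ?thesis by blast
  qed
qed

lemma mult_mat_sum: assumes "A \<in> carrier_mat n m" "B \<in> carrier_mat m k" "i < n" "j < k"
  shows "(A * B) $$ (i, j) = (\<Sum>l = 0..<m. A $$ (i, l) * B $$ (l, j))"
  using assms by (simp add: scalar_prod_def)

lemma sum_delta_l: "i < (n::nat) \<Longrightarrow> (\<Sum>k = 0..<n. if i = k then f k else 0) = (f i :: 'b :: comm_monoid_add)"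
  by simp

lemma sum_delta_r: "i < (n::nat) \<Longrightarrow> (\<Sum>k = 0..<n. if k = i then f k else 0) = (f i :: 'b :: comm_monoid_add)"
  by simp

lemma householder:
  fixes u :: "real vec"
  assumes u: "u \<in> carrier_vec n" and nu: "u \<bullet> u = 1" and n: "n > 0"
  shows "\<exists>H. H \<in> carrier_mat n n \<and> transpose_mat H = H \<and> H * H = 1\<^sub>m n \<and> (\<forall>i<n. H $$ (i, 0) = u $ i)"
proof -
  have nu': "(\<Sum>i = 0..<n. (u $ i)\<^sup>2) = 1" using nu u by (simp add: scalar_prod_def power2_eq_square)
  have u0: "(u $ 0)\<^sup>2 \<le> 1"
  proof -
    have "(\<Sum>i\<in>{0}. (u $ i)\<^sup>2) \<le> (\<Sum>i = 0..<n. (u $ i)\<^sup>2)" by (rule sum_mono2) (use n in auto)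
    then show ?thesis using nu' by simp
  qed
  show ?thesis
  proof (cases "u $ 0 = 1")
    case True
    have ui: "u $ i = 0" if "i < n" "i \<noteq> 0" for i
    proof -
      have "(\<Sum>k\<in>{0, i}. (u $ k)\<^sup>2) \<le> (\<Sum>k = 0..<n. (u $ k)\<^sup>2)" by (rule sum_mono2) (use n that in auto)
      then have "(u $ i)\<^sup>2 \<le> 0" using nu' True that by simp
      then show ?thesis by simp
    qed
    show ?thesis
      by (rule exI[of _ "1\<^sub>m n"]) (use True ui in auto)
  next
    case False
    have u0': "u $ 0 < 1" using u0 False by (metis abs_square_le_1 abs_le_iff less_eq_real_def)
    define w where "w = (\<lambda>i. u $ i - (if i = 0 then 1 else 0))"
    define ww where "ww = (\<Sum>k = 0..<n. (w k)\<^sup>2)"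
    have ww: "ww = 2 - 2 * u $ 0"
    proof -
      have "ww = (\<Sum>k = 0..<n. (u $ k)\<^sup>2 - 2 * (if k = 0 then u $ k else 0) + (if k = 0 then 1 else 0))"
        unfolding ww_def w_def by (intro sum.cong refl) (auto simp: power2_eq_square algebra_simps)
      also have "\<dots> = 1 - 2 * u $ 0 + 1" using n
        by (simp add: sum.distrib sum_subtractf nu' sum_distrib_left[symmetric] sum_delta_r)
      finally show ?thesis by simp
    qed
    have wwpos: "ww > 0" using ww u0' by simp
    define c where "c = 2 / ww"
    have cww: "c * ww = 2" unfolding c_def using wwpos by simp
    have cw0: "c * w 0 = -1" unfolding c_def w_def using ww u0' by (simp add: field_simps)
    define H where "H = mat n n (\<lambda>(i, j). (if i = j then 1 else 0) - c * w i * w j)"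
    have Hc: "H \<in> carrier_mat n n" unfolding H_def by simp
    have Ht: "transpose_mat H = H" unfolding H_def by (rule eq_matI) auto
    have HH: "H * H = 1\<^sub>m n"
    proof (rule eq_matI)
      fix i j assume i: "i < dim_row (1\<^sub>m n)" and j: "j < dim_col (1\<^sub>m n)"
      then have i: "i < n" and j: "j < n" by auto
      define A where "A k = (if i = k then (if k = j then 1 else 0) else (0::real))" for k
      define B where "B k = (if i = k then c * w k * w j else 0)" for k
      define C where "C k = (if k = j then c * w i * w k else 0)" for k
      define D where "D k = c * c * w i * w j * (w k)\<^sup>2" for k
      have "(H * H) $$ (i, j) = (\<Sum>l = 0..<n. H $$ (i, l) * H $$ (l, j))" by (rule mult_mat_sum[OF Hc Hc i j])
      also have "\<dots> = (\<Sum>k = 0..<n. ((if i = k then 1 else 0) - c * w i * w k) * ((if k = j then 1 else 0) - c * w k * w j))"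
        by (rule sum.cong[OF refl]) (use i j in \<open>simp add: H_def\<close>)
      also have "\<dots> = (\<Sum>k = 0..<n. A k - B k - C k + D k)"
      proof (rule sum.cong[OF refl])
        fix k
        show "((if i = k then 1 else 0) - c * w i * w k) * ((if k = j then 1 else 0) - c * w k * w j) = A k - B k - C k + D k"
          unfolding A_def B_def C_def D_def by (cases "i = k"; cases "k = j") (simp_all add: algebra_simps power2_eq_square)
      qed
      also have "\<dots> = sum A {0..<n} - sum B {0..<n} - sum C {0..<n} + sum D {0..<n}"
        by (simp only: sum.distrib sum_subtractf)
      also have "sum A {0..<n} = (if i = j then 1 else 0)" unfolding A_def using sum_delta_l[OF i] j by simp
      also have "sum B {0..<n} = c * w i * w j" unfolding B_def using sum_delta_l[OF i] i by simp
      also have "sum C {0..<n} = c * w i * w j" unfolding C_def using sum_delta_r[OF j] j by simp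
      also have "sum D {0..<n} = c * c * w i * w j * ww" unfolding D_def ww_def by (simp add: sum_distrib_left)
      also have "(if i = j then 1 else 0) - c * w i * w j - c * w i * w j + c * c * w i * w j * ww = (if i = j then 1 else 0)"
        using cww by (simp add: algebra_simps)
      finally show "(H * H) $$ (i, j) = 1\<^sub>m n $$ (i, j)" using i j by simp
    qed (use Hc in auto)
    have col0: "H $$ (i, 0) = u $ i" if i: "i < n" for i
    proof -
      have "H $$ (i, 0) = (if i = 0 then 1 else 0) - w i * (c * w 0)" unfolding H_def using i n by simp
      also have "\<dots> = (if i = 0 then 1 else 0) + w i" using cw0 by simp
      also have "\<dots> = u $ i" unfolding w_def by simp
      finally show ?thesis .
    qed
    show ?thesis using Hc Ht HH col0 by blast
  qed
qed

definition dg :: "real list \<Rightarrow> real mat" where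
  "dg es = mat (length es) (length es) (\<lambda>(i, j). if i = j then es ! i else 0)"

lemma dg_carrier[simp]: "dg es \<in> carrier_mat (length es) (length es)" unfolding dg_def by simp

lemma assoc5: assumes "H \<in> carrier_mat n n" "F \<in> carrier_mat n n" "D \<in> carrier_mat n n" "G \<in> carrier_mat n n"
  shows "(H * F) * D * (G * H) = H * (F * D * G) * H"
proof -
  have HF: "H * F \<in> carrier_mat n n" by (rule mult_carrier_mat[OF assms(1,2)])
  have HFD: "H * F * D \<in> carrier_mat n n" by (rule mult_carrier_mat[OF HF assms(3)])
  have FD: "F * D \<in> carrier_mat n n" by (rule mult_carrier_mat[OF assms(2,3)])
  have e1: "(H * F) * D * (G * H) = ((H * F) * D * G) * H" by (rule assoc_mult_mat[OF HFD assms(4) assms(1), symmetric])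
  have e2: "(H * F) * D * G = H * (F * D * G)"
    by (simp only: assoc_mult_mat[OF assms(1,2,3)] assoc_mult_mat[OF assms(1) FD assms(4)])
  show ?thesis by (subst e2[symmetric]) (rule e1)
qed

lemma spectral:
  fixes A :: "real mat"
  assumes "A \<in> carrier_mat n n" "transpose_mat A = A"
  shows "\<exists>U es. U \<in> carrier_mat n n \<and> length es = n \<and> transpose_mat U * U = 1\<^sub>m n \<and>
            A = U * dg es * transpose_mat U"
  using assms
proof (induction n arbitrary: A)
  case 0
  show ?case
    by (intro exI[of _ "1\<^sub>m 0"] exI[of _ "[]"]) (use 0 in \<open>auto intro!: eq_matI simp: dg_def\<close>)
next
  case (Suc n)
  let ?N = "Suc n"
  have A: "A \<in> carrier_mat ?N ?N" and At: "transpose_mat A = A" using Suc.prems by auto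
  have sym: "A $$ (i, j) = A $$ (j, i)" if "i < ?N" "j < ?N" for i j
  proof -
    have "transpose_mat A $$ (i, j) = A $$ (j, i)" using that A by simp
    then show ?thesis using At by simp
  qed
  obtain r v where v: "v \<in> carrier_vec ?N" "v \<noteq> 0\<^sub>v ?N" "A *\<^sub>v v = r \<cdot>\<^sub>v v"
    using sym_eigen_real[OF A _ sym] by auto
  have vv: "v \<bullet> v > 0"
  proof -
    obtain i where i: "i < ?N" "v $ i \<noteq> 0" using v(1,2) by (metis carrier_vecD eq_vecI index_zero_vec)
    have "(v $ i)\<^sup>2 \<le> (\<Sum>k = 0..<?N. (v $ k)\<^sup>2)" by (rule member_le_sum) (use i in auto)
    moreover have "(v $ i)\<^sup>2 > 0" using i by simp
    moreover have "v \<bullet> v = (\<Sum>k = 0..<?N. (v $ k)\<^sup>2)" using v(1) by (simp add: scalar_prod_def power2_eq_square)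
    ultimately show ?thesis by linarith
  qed
  define a where "a = 1 / sqrt (v \<bullet> v)"
  define u where "u = a \<cdot>\<^sub>v v"
  have uc: "u \<in> carrier_vec ?N" unfolding u_def using v by simp
  have uu: "u \<bullet> u = 1"
  proof -
    have "u \<bullet> u = a * (a * (v \<bullet> v))" unfolding u_def using v(1) by simp
    also have "\<dots> = 1" unfolding a_def using vv by (simp add: real_sqrt_mult[symmetric] field_simps)
    finally show ?thesis .
  qed
  have Au: "A *\<^sub>v u = r \<cdot>\<^sub>v u"
    unfolding u_def using mult_mat_vec[OF A v(1)] v(3) v(1) by (auto simp: smult_smult_assoc mult.commute)
  obtain H where H: "H \<in> carrier_mat ?N ?N" "transpose_mat H = H" "H * H = 1\<^sub>m ?N" "\<And>i. i < ?N \<Longrightarrow> H $$ (i, 0) = u $ i"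
    using householder[OF uc uu] by auto
  have colH: "col H 0 = u" using H(1,4) uc by (intro eq_vecI) auto
  define A' where "A' = H * A * H"
  have A'c: "A' \<in> carrier_mat ?N ?N" unfolding A'_def using H A by simp
  have A't: "transpose_mat A' = A'"
  proof -
    have "transpose_mat A' = transpose_mat H * (transpose_mat A * transpose_mat H)"
      unfolding A'_def using H(1) A
      by (simp add: transpose_mult[of H ?N ?N "A * H" ?N] transpose_mult[of A ?N ?N H ?N])
    also have "\<dots> = A'" unfolding A'_def using H A At by simp
    finally show ?thesis .
  qed
  have A'sym: "A' $$ (i, j) = A' $$ (j, i)" if "i < ?N" "j < ?N" for i j
  proof -
    have "transpose_mat A' $$ (i, j) = A' $$ (j, i)" using that A'c by simp
    then show ?thesis using A't by simp
  qed
  have A'col: "A' $$ (i, 0) = (if i = 0 then r else 0)" if i: "i < ?N" for i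
  proof -
    have c1: "col (A * H) 0 = A *\<^sub>v col H 0" by (rule col_mult2[OF A H(1)]) simp
    have colAH: "col (A * H) 0 = r \<cdot>\<^sub>v col H 0" unfolding c1 colH by (rule Au)
    have "A' $$ (i, 0) = (H * (A * H)) $$ (i, 0)" unfolding A'_def using H(1) A by simp
    also have "\<dots> = row H i \<bullet> col (A * H) 0" using H(1) A i by simp
    also have "\<dots> = r * (row H i \<bullet> col H 0)" unfolding colAH using H(1) i by simp
    also have "row H i \<bullet> col H 0 = (H * H) $$ (i, 0)" using H(1) i by simp
    also have "\<dots> = (if i = 0 then 1 else 0)" using H(3) i by simp
    finally show ?thesis by simp
  qed
  define B where "B = mat n n (\<lambda>(i, j). A' $$ (Suc i, Suc j))"
  have Bc: "B \<in> carrier_mat n n" unfolding B_def by simp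
  have Bt: "transpose_mat B = B" unfolding B_def by (rule eq_matI) (auto simp: A'sym)
  obtain U' es' where IH: "U' \<in> carrier_mat n n" "length es' = n" "transpose_mat U' * U' = 1\<^sub>m n"
      "B = U' * dg es' * transpose_mat U'"
    using Suc.IH[OF Bc Bt] by auto
  define R where "R = mat 1 1 (\<lambda>_. r)"
  have Rc: "R \<in> carrier_mat 1 1" unfolding R_def by simp
  have A'blk: "A' = four_block_mat R (0\<^sub>m 1 n) (0\<^sub>m n 1) B"
  proof (rule eq_matI)
    fix i j assume i: "i < dim_row (four_block_mat R (0\<^sub>m 1 n) (0\<^sub>m n 1) B)"
      and j: "j < dim_col (four_block_mat R (0\<^sub>m 1 n) (0\<^sub>m n 1) B)"
    then have i': "i < ?N" and j': "j < ?N" using Rc Bc by auto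
    show "A' $$ (i, j) = four_block_mat R (0\<^sub>m 1 n) (0\<^sub>m n 1) B $$ (i, j)"
    proof (cases "i = 0")
      case True
      then show ?thesis using A'col[OF j'] A'sym[OF i' j'] Rc Bc j' unfolding R_def by auto
    next
      case False
      show ?thesis
      proof (cases "j = 0")
        case True
        then show ?thesis using A'col[OF i'] False Rc Bc i' unfolding R_def by auto
      next
        case False
        then show ?thesis using \<open>i \<noteq> 0\<close> Rc Bc i' j' unfolding B_def by auto
      qed
    qed
  qed (use A'c Rc Bc in auto)
  define F where "F = four_block_mat (1\<^sub>m 1) (0\<^sub>m 1 n) (0\<^sub>m n 1) U'"
  have Fc: "F \<in> carrier_mat ?N ?N" unfolding F_def using IH(1) by (metis four_block_carrier_mat one_carrier_mat plus_1_eq_Suc)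
  have Ft: "transpose_mat F = four_block_mat (1\<^sub>m 1) (0\<^sub>m 1 n) (0\<^sub>m n 1) (transpose_mat U')"
    unfolding F_def using IH(1) by (subst transpose_four_block_mat[of _ 1 1 _ n _ n]) auto
  have FtF: "transpose_mat F * F = 1\<^sub>m ?N"
  proof -
    have "transpose_mat F * F = four_block_mat (1\<^sub>m 1 * 1\<^sub>m 1 + 0\<^sub>m 1 n * 0\<^sub>m n 1) (1\<^sub>m 1 * 0\<^sub>m 1 n + 0\<^sub>m 1 n * U')
        (0\<^sub>m n 1 * 1\<^sub>m 1 + transpose_mat U' * 0\<^sub>m n 1) (0\<^sub>m n 1 * 0\<^sub>m 1 n + transpose_mat U' * U')"
      unfolding Ft by (unfold F_def, rule mult_four_block_mat) (use IH(1) in auto)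
    also have "\<dots> = four_block_mat (1\<^sub>m 1) (0\<^sub>m 1 n) (0\<^sub>m n 1) (1\<^sub>m n)" using IH(1,3) by simp
    also have "\<dots> = 1\<^sub>m ?N" by simp
    finally show ?thesis .
  qed
  define es where "es = r # es'"
  have dges: "dg es = four_block_mat R (0\<^sub>m 1 n) (0\<^sub>m n 1) (dg es')"
    unfolding dg_def es_def R_def using IH(2) by (intro eq_matI) (auto simp: nth_Cons')
  have FDF: "F * dg es * transpose_mat F = A'"
  proof -
    have dgc: "dg es' \<in> carrier_mat n n" using dg_carrier[of es'] IH(2) by simp
    have "F * dg es = four_block_mat (1\<^sub>m 1 * R + 0\<^sub>m 1 n * 0\<^sub>m n 1) (1\<^sub>m 1 * 0\<^sub>m 1 n + 0\<^sub>m 1 n * dg es')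
        (0\<^sub>m n 1 * R + U' * 0\<^sub>m n 1) (0\<^sub>m n 1 * 0\<^sub>m 1 n + U' * dg es')"
      unfolding F_def dges using IH(1,2) Rc by (intro mult_four_block_mat) auto
    also have "\<dots> = four_block_mat R (0\<^sub>m 1 n) (0\<^sub>m n 1) (U' * dg es')" using IH(1,2) Rc dgc by simp
    finally have 1: "F * dg es = four_block_mat R (0\<^sub>m 1 n) (0\<^sub>m n 1) (U' * dg es')" .
    have "F * dg es * transpose_mat F = four_block_mat (R * 1\<^sub>m 1 + 0\<^sub>m 1 n * 0\<^sub>m n 1) (R * 0\<^sub>m 1 n + 0\<^sub>m 1 n * transpose_mat U')
        (0\<^sub>m n 1 * 1\<^sub>m 1 + (U' * dg es') * 0\<^sub>m n 1) (0\<^sub>m n 1 * 0\<^sub>m 1 n + (U' * dg es') * transpose_mat U')"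
      unfolding 1 Ft using IH(1,2) Rc by (intro mult_four_block_mat) auto
    also have "\<dots> = four_block_mat R (0\<^sub>m 1 n) (0\<^sub>m n 1) B" using IH Rc dgc by simp
    finally show ?thesis using A'blk by simp
  qed
  have Ftc: "transpose_mat F \<in> carrier_mat ?N ?N" using Fc by simp
  define U where "U = H * F"
  have Uc: "U \<in> carrier_mat ?N ?N" unfolding U_def using H(1) Fc by simp
  have Ut: "transpose_mat U = transpose_mat F * H" unfolding U_def using H(1,2) Fc
    by (simp add: transpose_mult[of _ ?N ?N])
  have HHX: "H * (H * X) = X" if "X \<in> carrier_mat ?N k" for X k
  proof -
    have "H * (H * X) = (H * H) * X" using H(1) that by simp
    then show ?thesis using H(3) that by simp
  qed
  have UtU: "transpose_mat U * U = 1\<^sub>m ?N"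
  proof -
    have "transpose_mat U * U = (transpose_mat F * H) * (H * F)" by (subst Ut) (simp add: U_def)
    also have "\<dots> = transpose_mat F * (H * (H * F))" by (rule assoc_mult_mat[OF Ftc H(1), of _ ?N]) (use H(1) Fc in simp)
    also have "H * (H * F) = F" by (rule HHX[OF Fc])
    finally show ?thesis using FtF by simp
  qed
  have "U * dg es * transpose_mat U = H * (F * dg es * transpose_mat F) * H"
  proof -
    have Dc: "dg es \<in> carrier_mat ?N ?N" using dg_carrier[of es] IH(2) es_def by simp
    show ?thesis by (subst Ut) (unfold U_def, rule assoc5[OF H(1) Fc Dc Ftc])
  qed
  also have "\<dots> = H * A' * H" unfolding FDF ..
  also have "H * A' = A * H"
  proof -
    have HA: "H * A \<in> carrier_mat ?N ?N" by (rule mult_carrier_mat[OF H(1) A])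
    have "H * A' = (H * (H * A)) * H" unfolding A'_def by (rule assoc_mult_mat[OF H(1) HA H(1), symmetric])
    also have "H * (H * A) = A" by (rule HHX[OF A])
    finally show ?thesis .
  qed
  also have "A * H * H = A * (H * H)" by (rule assoc_mult_mat[OF A H(1) H(1)])
  also have "\<dots> = A" using H(3) A by simp
  finally have "A = U * dg es * transpose_mat U" by simp
  moreover have "length es = ?N" using IH(2) es_def by simp
  ultimately show ?case using Uc UtU by blast
qed

lemma quad_form:
  fixes U :: "nat \<Rightarrow> nat \<Rightarrow> real" and e c :: "nat \<Rightarrow> real" and M :: "nat \<Rightarrow> nat \<Rightarrow> real"
  assumes orth: "\<And>i j. i < n \<Longrightarrow> j < n \<Longrightarrow> (\<Sum>r = 0..<n. U r i * U r j) = (if i = j then 1 else 0)"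
    and rep: "\<And>a b. a < n \<Longrightarrow> b < n \<Longrightarrow> M a b = (\<Sum>k = 0..<n. U a k * e k * U b k)"
  defines "x \<equiv> (\<lambda>a. \<Sum>l = 0..<n. c l * U a l)"
  shows "(\<Sum>a = 0..<n. \<Sum>b = 0..<n. x a * x b * M a b) = (\<Sum>k = 0..<n. e k * (c k)\<^sup>2)"
proof -
  have xu: "(\<Sum>a = 0..<n. x a * U a k) = c k" if k: "k < n" for k
  proof -
    have "(\<Sum>a = 0..<n. x a * U a k) = (\<Sum>a = 0..<n. \<Sum>l = 0..<n. c l * (U a l * U a k))"
      unfolding x_def by (simp add: sum_distrib_right mult.assoc)
    also have "\<dots> = (\<Sum>l = 0..<n. c l * (\<Sum>a = 0..<n. U a l * U a k))"
      by (subst sum.swap) (simp add: sum_distrib_left)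
    also have "\<dots> = (\<Sum>l = 0..<n. if l = k then c l else 0)"
      by (rule sum.cong[OF refl]) (use orth k in auto)
    also have "\<dots> = c k" using k by simp
    finally show ?thesis .
  qed
  have "(\<Sum>a = 0..<n. \<Sum>b = 0..<n. x a * x b * M a b)
      = (\<Sum>a = 0..<n. \<Sum>b = 0..<n. \<Sum>k = 0..<n. e k * ((x a * U a k) * (x b * U b k)))"
    by (rule sum.cong[OF refl], rule sum.cong[OF refl]) (simp add: rep sum_distrib_left mult_ac)
  also have "\<dots> = (\<Sum>k = 0..<n. \<Sum>a = 0..<n. \<Sum>b = 0..<n. e k * ((x a * U a k) * (x b * U b k)))"
  proof -
    have "(\<Sum>a = 0..<n. \<Sum>b = 0..<n. \<Sum>k = 0..<n. e k * ((x a * U a k) * (x b * U b k)))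
        = (\<Sum>a = 0..<n. \<Sum>k = 0..<n. \<Sum>b = 0..<n. e k * ((x a * U a k) * (x b * U b k)))"
      by (rule sum.cong[OF refl]) (rule sum.swap)
    also have "\<dots> = (\<Sum>k = 0..<n. \<Sum>a = 0..<n. \<Sum>b = 0..<n. e k * ((x a * U a k) * (x b * U b k)))"
      by (rule sum.swap)
    finally show ?thesis .
  qed
  also have "\<dots> = (\<Sum>k = 0..<n. e k * ((\<Sum>a = 0..<n. x a * U a k) * (\<Sum>b = 0..<n. x b * U b k)))"
    by (rule sum.cong[OF refl], subst sum_product) (simp only: sum_distrib_left)
  also have "\<dots> = (\<Sum>k = 0..<n. e k * (c k)\<^sup>2)"
    by (rule sum.cong[OF refl]) (simp add: xu power2_eq_square)
  finally show ?thesis .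
qed

lemma poly_prod_lin: "poly (\<Prod>e\<leftarrow>es. [:- e, 1:]) r = 0 \<longleftrightarrow> r \<in> set (es :: real list)"
  by (induction es) auto

lemma prod_lin_nz: "(\<Prod>e\<leftarrow>es. [:- e, 1:]) \<noteq> (0 :: real poly)"
  by (auto simp: prod_list_zero_iff)

lemma order_prod_lin: "order r (\<Prod>e\<leftarrow>es. [:- e, 1:]) = count_list es (r :: real)"
proof (induction es)
  case Nil
  then show ?case using order_0I[of 1 r] by simp
next
  case (Cons e es)
  have eq: "(\<Prod>x\<leftarrow>e # es. [:- x, 1:]) = [:- e, 1:] * (\<Prod>x\<leftarrow>es. [:- x, 1:])" by simp
  have nz: "[:- e, 1:] * (\<Prod>x\<leftarrow>es. [:- x, 1:]) \<noteq> 0" by (metis prod_lin_nz eq)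
  have "order r (\<Prod>e\<leftarrow>e # es. [:- e, 1:]) = order r [:- e, 1:] + order r (\<Prod>e\<leftarrow>es. [:- e, 1:])"
    unfolding eq by (rule order_mult[OF nz])
  also have "order r [:- e, 1:] = (if r = e then 1 else 0)"
  proof (cases "r = e")
    case True then show ?thesis using order_power_n_n[of r 1] by simp
  next
    case False then show ?thesis using order_0I[of "[:- e, 1:]" r] by simp
  qed
  finally show ?case using Cons by simp
qed

lemma count_filter_pos: "r > 0 \<Longrightarrow> count_list (filter (\<lambda>x. x > 0) es) r = count_list es (r :: real)"
  by (induction es) auto

lemma num_pos_list: "num_pos_eigenvalues A = length (filter (\<lambda>x. x > 0) es)"
  if "char_poly A = (\<Prod>e\<leftarrow>es. [:- e, 1:])"
proof -
  have "{r. r > 0 \<and> poly (char_poly A) r = 0} = set (filter (\<lambda>x. x > 0) es)"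
    using that poly_prod_lin by auto
  then have "num_pos_eigenvalues A = (\<Sum>r\<in>set (filter (\<lambda>x. x > 0) es). count_list es r)"
    unfolding num_pos_eigenvalues_def that order_prod_lin by simp
  also have "\<dots> = (\<Sum>r\<in>set (filter (\<lambda>x. x > 0) es). count_list (filter (\<lambda>x. x > 0) es) r)"
    by (rule sum.cong[OF refl]) (simp add: count_filter_pos)
  also have "\<dots> = length (filter (\<lambda>x. x > 0) es)" by (rule sum_count_set) auto
  finally show ?thesis .
qed

lemma count_pos_one:
  fixes A :: "real mat"
  assumes A: "A \<in> carrier_mat n n" and sym: "transpose_mat A = A"
    and diag: "\<And>i. i < n \<Longrightarrow> A $$ (i, i) = 0"
    and form: "\<And>x. (\<Sum>a = 0..<n. x a) = 0 \<Longrightarrow> (\<Sum>a = 0..<n. \<Sum>b = 0..<n. x a * x b * A $$ (a, b)) \<le> 0"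
    and nz: "i0 < n" "j0 < n" "A $$ (i0, j0) \<noteq> 0"
  shows "num_pos_eigenvalues A = 1"
proof -
  obtain U es where U: "U \<in> carrier_mat n n" "length es = n" "transpose_mat U * U = 1\<^sub>m n"
    "A = U * dg es * transpose_mat U"
    using spectral[OF A sym] by auto
  have Utc: "transpose_mat U \<in> carrier_mat n n" using U(1) by simp
  have Dc: "dg es \<in> carrier_mat n n" using dg_carrier[of es] U(2) by simp
  have UUt: "U * transpose_mat U = 1\<^sub>m n" by (rule mat_mult_left_right_inverse[OF Utc U(1) U(3)])
  have orth: "(\<Sum>r = 0..<n. U $$ (r, i) * U $$ (r, j)) = (if i = j then 1 else 0)" if "i < n" "j < n" for i j
  proof -
    have "(transpose_mat U * U) $$ (i, j) = (\<Sum>r = 0..<n. transpose_mat U $$ (i, r) * U $$ (r, j))"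
      by (rule mult_mat_sum[OF Utc U(1) that])
    also have "\<dots> = (\<Sum>r = 0..<n. U $$ (r, i) * U $$ (r, j))"
      by (rule sum.cong[OF refl]) (use U(1) that in simp)
    finally show ?thesis using U(3) that by simp
  qed
  have rep: "A $$ (a, b) = (\<Sum>k = 0..<n. U $$ (a, k) * es ! k * U $$ (b, k))" if ab: "a < n" "b < n" for a b
  proof -
    have UD: "U * dg es \<in> carrier_mat n n" using U(1) Dc by simp
    have "A $$ (a, b) = (\<Sum>l = 0..<n. (U * dg es) $$ (a, l) * transpose_mat U $$ (l, b))"
      unfolding U(4) by (rule mult_mat_sum[OF UD Utc ab])
    also have "\<dots> = (\<Sum>l = 0..<n. U $$ (a, l) * es ! l * U $$ (b, l))"
    proof (rule sum.cong[OF refl])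
      fix l assume l: "l \<in> {0..<n}"
      have "(U * dg es) $$ (a, l) = (\<Sum>m = 0..<n. U $$ (a, m) * dg es $$ (m, l))"
        using mult_mat_sum[OF U(1) Dc ab(1)] l by simp
      also have "\<dots> = (\<Sum>m = 0..<n. if m = l then U $$ (a, m) * es ! m else 0)"
        by (rule sum.cong[OF refl]) (use l U(2) in \<open>auto simp: dg_def\<close>)
      also have "\<dots> = U $$ (a, l) * es ! l" using l by simp
      finally show "(U * dg es) $$ (a, l) * transpose_mat U $$ (l, b) = U $$ (a, l) * es ! l * U $$ (b, l)"
        using l ab U(1) by simp
    qed
    finally show ?thesis .
  qed
  have cp: "char_poly A = (\<Prod>e\<leftarrow>es. [:- e, 1:])"
  proof -
    have "similar_mat_wit A (dg es) U (transpose_mat U)"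
      unfolding similar_mat_wit_def Let_def using A Dc U(1) Utc UUt U(3) U(4) by auto
    then have "similar_mat A (dg es)" unfolding similar_mat_def by blast
    then have "char_poly A = char_poly (dg es)" by (rule char_poly_similar)
    also have "char_poly (dg es) = (\<Prod>a\<leftarrow>diag_mat (dg es). [:- a, 1:])"
      by (rule char_poly_upper_triangular[OF Dc]) (auto simp: upper_triangular_def dg_def)
    also have "diag_mat (dg es) = es" unfolding diag_mat_def dg_def
      by (intro nth_equalityI) auto
    finally show ?thesis .
  qed
  have npos: "num_pos_eigenvalues A = card {k. k < n \<and> 0 < es ! k}"
    unfolding num_pos_list[OF cp] length_filter_conv_card U(2) ..
  define K where "K = {k. k < n \<and> 0 < es ! k}"
  have tr: "(\<Sum>k = 0..<n. es ! k) = 0"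
  proof -
    have "0 = (\<Sum>i = 0..<n. A $$ (i, i))" using diag by simp
    also have "\<dots> = (\<Sum>i = 0..<n. \<Sum>k = 0..<n. es ! k * (U $$ (i, k) * U $$ (i, k)))"
      by (rule sum.cong[OF refl]) (simp add: rep mult_ac)
    also have "\<dots> = (\<Sum>k = 0..<n. es ! k * (\<Sum>i = 0..<n. U $$ (i, k) * U $$ (i, k)))"
      by (subst sum.swap) (simp add: sum_distrib_left)
    also have "\<dots> = (\<Sum>k = 0..<n. es ! k)"
      by (rule sum.cong[OF refl]) (simp add: orth)
    finally show ?thesis by simp
  qed
  have Kne: "K \<noteq> {}"
  proof
    assume "K = {}"
    then have le: "\<And>k. k < n \<Longrightarrow> es ! k \<le> 0" unfolding K_def by force
    have "(\<Sum>k = 0..<n. - (es ! k)) = 0" using tr by (simp add: sum_negf)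
    then have "\<forall>k\<in>{0..<n}. - (es ! k) = 0" using le by (subst sum_nonneg_eq_0_iff[symmetric]) auto
    then have "A $$ (i0, j0) = 0" using rep[OF nz(1,2)] by simp
    then show False using nz(3) by simp
  qed
  have Kle: "i = j" if "i \<in> K" "j \<in> K" for i j
  proof (rule ccontr)
    assume ij: "i \<noteq> j"
    have i: "i < n" "es ! i > 0" and j: "j < n" "es ! j > 0" using that K_def by auto
    define \<sigma> where "\<sigma> k = (\<Sum>a = 0..<n. U $$ (a, k))" for k
    define \<alpha> where "\<alpha> = (if \<sigma> i = 0 \<and> \<sigma> j = 0 then 1 else \<sigma> j)"
    define \<beta> where "\<beta> = (if \<sigma> i = 0 \<and> \<sigma> j = 0 then 0 else - \<sigma> i)"
    have ab_nz: "\<alpha> \<noteq> 0 \<or> \<beta> \<noteq> 0" unfolding \<alpha>_def \<beta>_def by auto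
    have ab_sum: "\<alpha> * \<sigma> i + \<beta> * \<sigma> j = 0" unfolding \<alpha>_def \<beta>_def by auto
    define c where "c k = (if k = i then \<alpha> else if k = j then \<beta> else 0)" for k
    define x where "x a = (\<Sum>l = 0..<n. c l * U $$ (a, l))" for a
    have xs: "(\<Sum>a = 0..<n. x a) = 0"
    proof -
      have "(\<Sum>a = 0..<n. x a) = (\<Sum>l = 0..<n. c l * \<sigma> l)"
        unfolding x_def \<sigma>_def by (subst sum.swap) (simp add: sum_distrib_left)
      also have "\<dots> = (\<Sum>l = 0..<n. (if l = i then \<alpha> * \<sigma> i else 0) + (if l = j then \<beta> * \<sigma> j else 0))"
        by (rule sum.cong[OF refl]) (use ij in \<open>auto simp: c_def\<close>)
      also have "\<dots> = \<alpha> * \<sigma> i + \<beta> * \<sigma> j" using i j by (simp add: sum.distrib)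
      finally show ?thesis using ab_sum by simp
    qed
    have "(\<Sum>a = 0..<n. \<Sum>b = 0..<n. x a * x b * A $$ (a, b)) = (\<Sum>k = 0..<n. es ! k * (c k)\<^sup>2)"
      unfolding x_def
      by (rule quad_form[where U = "\<lambda>a k. U $$ (a, k)" and M = "\<lambda>a b. A $$ (a, b)" and e = "\<lambda>k. es ! k"])
         (auto simp: orth rep)
    also have "\<dots> = (\<Sum>k = 0..<n. (if k = i then es ! i * \<alpha>\<^sup>2 else 0) + (if k = j then es ! j * \<beta>\<^sup>2 else 0))"
      by (rule sum.cong[OF refl]) (use ij in \<open>auto simp: c_def\<close>)
    also have "\<dots> = es ! i * \<alpha>\<^sup>2 + es ! j * \<beta>\<^sup>2" using i j by (simp add: sum.distrib)
    finally have eq: "(\<Sum>a = 0..<n. \<Sum>b = 0..<n. x a * x b * A $$ (a, b)) = es ! i * \<alpha>\<^sup>2 + es ! j * \<beta>\<^sup>2" .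
    have "es ! i * \<alpha>\<^sup>2 + es ! j * \<beta>\<^sup>2 > 0"
    proof (cases "\<alpha> \<noteq> 0")
      case True
      then have "es ! i * \<alpha>\<^sup>2 > 0" using i by simp
      moreover have "es ! j * \<beta>\<^sup>2 \<ge> 0" using j by simp
      ultimately show ?thesis by linarith
    next
      case False
      then have "es ! j * \<beta>\<^sup>2 > 0" using j ab_nz by simp
      moreover have "es ! i * \<alpha>\<^sup>2 \<ge> 0" using i by simp
      ultimately show ?thesis by linarith
    qed
    then show False using form[OF xs] eq by simp
  qed
  obtain i where iK: "i \<in> K" using Kne by auto
  have "K = {i}" using Kle iK by auto
  then show ?thesis using npos K_def by simp
qed

context tree_ctx begin

lemma entry_pos: assumes V: "a \<in> V" "b \<in> V" "c \<in> V" and bc: "b \<noteq> c"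
  shows "min4pc_entry V E (a, b) (a, c) > 0"
proof -
  have e: "min4pc_entry V E (a, b) (a, c) =
    min (real (d a c) + real (d b a)) (min (real (d a a) + real (d b c)) (real (d a b) + real (d a c)))"
    unfolding min4pc_entry_def by simp
  have "d b c \<le> d b a + d a c" using d_tri V by blast
  moreover have "d b a = d a b" using d_sym V by auto
  moreover have "d a a = 0" using d_refl V by auto
  moreover have "d b c \<noteq> 0" using d_zero V bc by blast
  ultimately show ?thesis unfolding e by (simp add: min_def)
qed

lemma eig: assumes c3: "card V \<ge> 3" shows "num_pos_eigenvalues (min4pc_matrix V E) = 1"
proof -
  define ps where "ps = sorted_list_of_set (pairs2 V)"
  define N where "N = length ps"
  define M where "M = mat N N (\<lambda>(r, c). min4pc_entry V E (ps ! r) (ps ! c))"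
  have MM: "min4pc_matrix V E = M" unfolding min4pc_matrix_def M_def N_def ps_def Let_def ..
  have setps: "set ps = pairs2 V" unfolding ps_def using finite_pairs2 by simp
  have psin: "ps ! r \<in> pairs2 V" if "r < N" for r using that setps N_def nth_mem by blast
  have Mc: "M \<in> carrier_mat N N" unfolding M_def by simp
  have Mij: "M $$ (r, s) = min4pc_entry V E (ps ! r) (ps ! s)" if "r < N" "s < N" for r s
    unfolding M_def using that by simp
  have Mcut: "M $$ (r, s) = (\<Sum>e\<in>Edges. if phi e (ps ! r) \<noteq> phi e (ps ! s) then 1 else 0)"
    if "r < N" "s < N" for r s using Mij[OF that] m_cut[OF psin psin] that by simp
  have Mt: "transpose_mat M = M"
  proof (rule eq_matI)
    fix i j assume "i < dim_row M" "j < dim_col M"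
    then have ij: "i < N" "j < N" using Mc by auto
    show "transpose_mat M $$ (i, j) = M $$ (i, j)" using ij Mc Mcut[OF ij] Mcut[of j i] by (auto intro!: sum.cong)
  qed (use Mc in auto)
  have Md: "M $$ (i, i) = 0" if "i < N" for i using Mcut[OF that that] by simp
  have Mform: "(\<Sum>a = 0..<N. \<Sum>b = 0..<N. x a * x b * M $$ (a, b)) \<le> 0"
    if "(\<Sum>a = 0..<N. x a) = 0" for x
    by (rule form_nonpos0[OF _ finite_Edges _ that, where g = "\<lambda>e r. phi e (ps ! r)"]) (auto simp: Mcut)
  have finV': "finite V" using finV .
  have Vne: "V \<noteq> {}" using c3 by auto
  define a where "a = Min V"
  have aV: "a \<in> V" unfolding a_def using finV Vne by simp
  have amin: "\<And>x. x \<in> V \<Longrightarrow> a \<le> x" unfolding a_def using finV by simp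
  have "card (V - {a}) \<ge> 2" using c3 aV finV by (simp add: card_Diff_singleton)
  then obtain b where b: "b \<in> V - {a}" by (metis card.empty ex_in_conv not_numeral_le_zero)
  have "card (V - {a} - {b}) \<ge> 1" using \<open>card (V - {a}) \<ge> 2\<close> b finV by (simp add: card_Diff_singleton)
  then obtain c where c: "c \<in> V - {a} - {b}" by (metis card.empty ex_in_conv not_one_le_zero)
  have ab: "a < b" using amin b by force
  have ac: "a < c" using amin c by force
  have p: "(a, b) \<in> set ps" and q: "(a, c) \<in> set ps" unfolding setps pairs2_def using aV b c ab ac by auto
  obtain r where r: "r < N" "ps ! r = (a, b)" using p unfolding N_def by (metis in_set_conv_nth)
  obtain s where s: "s < N" "ps ! s = (a, c)" using q unfolding N_def by (metis in_set_conv_nth)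
  have "M $$ (r, s) > 0" using Mij[OF r(1) s(1)] r s entry_pos[OF aV, of b c] b c by auto
  then have nz: "M $$ (r, s) \<noteq> 0" by simp
  show ?thesis unfolding MM by (rule count_pos_one[OF Mc Mt Md Mform r(1) s(1) nz])
qed

end

theorem corollary4p3:
  fixes V :: "'a::linorder set" and E :: "'a \<Rightarrow> 'a \<Rightarrow> bool"
  assumes "is_tree V E"
  shows "hypermetric (pairs2 V) (min4pc_entry V E) \<and>
         negative_type (pairs2 V) (min4pc_entry V E) \<and>
         (card V \<ge> 3 \<longrightarrow> num_pos_eigenvalues (min4pc_matrix V E) = 1)"
proof -
  interpret tree_ctx V E using assms by unfold_locales
  show ?thesis using hyper negtype eig by blast
qed

end
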